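(* Let $(a,D)$ be a weak hyperoperator on $\mathbb{R}^n$ in the complex Banach space $X$ such that for every $\phi\in\mathcal{D}(\mathbb{R}^n)$ the closure $\overline{\phi(a)}$ of $\phi(a)$ is a bounded operator on $X$, and assume $\bigcap_{\phi\in\mathcal{D}(\mathbb{R}^n)}\operatorname{Ker}\overline{\phi(a)}=\{0\}$. Then the map $A$ defined by $A(\phi)=\overline{\phi(a)}$ is a hyperoperator on $\mathbb{R}^n$ with $D_A=\bigcup_{\phi\in\mathcal{D}(\mathbb{R}^n)}\operatorname{Im}\overline{\phi(a)}\supseteq D$. Moreover, if $a'$ is the operator tuple associated to $A$, then $\overline{a'}=\overline{a}$.
   Context: $X$ is a complex Banach space, $L(X)$ the bounded operators. $\mathcal{D}(\mathbb{R}^n)=C_c^\infty(\mathbb{R}^n)$, $\mathcal{E}(\mathbb{R}^n)=C^\infty(\mathbb{R}^n)$ (complex-valued) with the topology of uniform convergence of all derivatives on compacts. For a dense subspace $D\subset X$, $\mathbf{L}(D)$ is the set of closable linear operators $D\to D$. A weak hyperoperator $(c,D)$ on $\mathbb{R}^n$ is a tuple $c=(c_1,\dots,c_n)$ of linear operators $D\to D$, with $D$ dense, $c$ closable, together with a linear multiplicative map $\mathcal{E}(\mathbb{R}^n)\to\mathbf{L}(D)$, $h\mapsto h(c)$, that sends each polynomial $p$ to $p(c_1,\dots,c_n)$, and such that $h_k(c)x\to h(c)x$ for all $x\in D$ whenever $h_k\to h$ in $\mathcal{E}(\mathbb{R}^n)$. A hyperoperator on $\mathbb{R}^n$ is a linear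 map $A:\mathcal{D}(\mathbb{R}^n)\to L(X)$, continuous ($A(\phi_j)\to0$ in operator norm when $\phi_j\to0$ in $\mathcal{D}(\mathbb{R}^n)$), multiplicative, with (i) $D_A:=\bigcup_\phi\operatorname{Im}A(\phi)$ dense and (ii) $\bigcap_\phi\operatorname{Ker}A(\phi)=\{0\}$. Its associated tuple $a'=(a'_1,\dots,a'_n)$ has domain $D_A$, $a'_jx:=A(\xi_j\phi)y$ if $x=A(\phi)y$ (well defined). Closures of tuples are taken via the closure of the graph in $X\times X^n$. *)

theory Defs
  imports "HOL-Analysis.Analysis"
begin

class complex_banach = banach +
  fixes scaleC :: "complex \<Rightarrow> 'a \<Rightarrow> 'a"
  assumes scaleC_of_real: "scaleC (complex_of_real r) x = r *\<^sub>R x"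
    and scaleC_add_right: "scaleC a (x + y) = scaleC a x + scaleC a y"
    and scaleC_add_left: "scaleC (a + b) x = scaleC a x + scaleC b x"
    and scaleC_scaleC: "scaleC a (scaleC b x) = scaleC (a * b) x"
    and scaleC_one: "scaleC 1 x = x"
    and norm_scaleC: "norm (scaleC a x) = cmod a * norm x"

definition csubspace :: "'x::complex_banach set \<Rightarrow> bool" where
  "csubspace S \<longleftrightarrow> 0 \<in> S \<and> (\<forall>x\<in>S. \<forall>y\<in>S. x + y \<in> S)
     \<and> (\<forall>a. \<forall>x\<in>S. scaleC a x \<in> S)"

definition clinear_on :: "'x::complex_banach set \<Rightarrow> ('x \<Rightarrow> 'y::complex_banach) \<Rightarrow> bool" where
  "clinear_on S T \<longleftrightarrow> (\<forall>x\<in>S. \<forall>y\<in>S. T (x + y) = T x + T y)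
     \<and> (\<forall>a. \<forall>x\<in>S. T (scaleC a x) = scaleC a (T x))"

definition bounded_cop :: "('x::complex_banach \<Rightarrow> 'x) \<Rightarrow> bool" where
  "bounded_cop T \<longleftrightarrow> clinear_on UNIV T \<and> (\<exists>K. \<forall>x. norm (T x) \<le> K * norm x)"

definition op_graph :: "'x set \<Rightarrow> ('x \<Rightarrow> 'y) \<Rightarrow> ('x \<times> 'y) set" where
  "op_graph S T = {(x, T x) | x. x \<in> S}"

definition is_graph :: "('x \<times> 'y) set \<Rightarrow> bool" where
  "is_graph G \<longleftrightarrow> (\<forall>x y z. (x, y) \<in> G \<and> (x, z) \<in> G \<longrightarrow> y = z)"

definition closable :: "'x::topological_space set \<Rightarrow> ('x \<Rightarrow> 'y::topological_space) \<Rightarrow> bool" where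
  "closable S T \<longleftrightarrow> is_graph (closure (op_graph S T))"

text \<open>The closure of a (closable) operator: the operator whose graph is the closure of the graph.
  Its domain is \<open>fst ` closure (op_graph S T)\<close>.\<close>
definition op_closure :: "'x::topological_space set \<Rightarrow> ('x \<Rightarrow> 'y::topological_space) \<Rightarrow> 'x \<Rightarrow> 'y" where
  "op_closure S T x = (THE y. (x, y) \<in> closure (op_graph S T))"

definition tuple_graph :: "'x set \<Rightarrow> ('n::finite \<Rightarrow> 'x \<Rightarrow> 'x) \<Rightarrow> ('x \<times> ('x ^ 'n)) set" where
  "tuple_graph S c = {(x, \<chi> j. c j x) | x. x \<in> S}"

definition tuple_closable :: "'x::topological_space set \<Rightarrow> ('n::finite \<Rightarrow> 'x \<Rightarrow> 'x) \<Rightarrow> bool" where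
  "tuple_closable S c \<longleftrightarrow> is_graph (closure (tuple_graph S c))"

definition partial :: "'n::finite \<Rightarrow> (real ^ 'n \<Rightarrow> complex) \<Rightarrow> real ^ 'n \<Rightarrow> complex" where
  "partial i f x = vector_derivative (\<lambda>t. f (x + t *\<^sub>R axis i 1)) (at 0)"

fun dpart :: "'n::finite list \<Rightarrow> (real ^ 'n \<Rightarrow> complex) \<Rightarrow> real ^ 'n \<Rightarrow> complex" where
  "dpart [] f = f"
| "dpart (i # is) f = partial i (dpart is f)"

definition smooth :: "(real ^ 'n::finite \<Rightarrow> complex) \<Rightarrow> bool" where
  "smooth f \<longleftrightarrow> (\<forall>is. continuous_on UNIV (dpart is f)
      \<and> (\<forall>i x. (\<lambda>t. dpart is f (x + t *\<^sub>R axis i 1)) differentiable (at 0)))"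

definition tsupport :: "(real ^ 'n::finite \<Rightarrow> complex) \<Rightarrow> (real ^ 'n) set" where
  "tsupport f = closure {x. f x \<noteq> 0}"

definition test_fun :: "(real ^ 'n::finite \<Rightarrow> complex) \<Rightarrow> bool" where
  "test_fun f \<longleftrightarrow> smooth f \<and> compact (tsupport f)"

definition conv_E :: "(nat \<Rightarrow> real ^ 'n::finite \<Rightarrow> complex) \<Rightarrow> (real ^ 'n \<Rightarrow> complex) \<Rightarrow> bool" where
  "conv_E h g \<longleftrightarrow> (\<forall>is K. compact K \<longrightarrow>
      uniform_limit K (\<lambda>k. dpart is (h k)) (dpart is g) sequentially)"

definition conv_D0 :: "(nat \<Rightarrow> real ^ 'n::finite \<Rightarrow> complex) \<Rightarrow> bool" where
  "conv_D0 \<phi> \<longleftrightarrow> (\<exists>K. compact K \<and> (\<forall>j. tsupport (\<phi> j) \<subseteq> K))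
      \<and> (\<forall>is. uniform_limit UNIV (\<lambda>j. dpart is (\<phi> j)) (\<lambda>_. 0) sequentially)"

definition coord :: "'n::finite \<Rightarrow> real ^ 'n \<Rightarrow> complex" where
  "coord j = (\<lambda>\<xi>. complex_of_real (\<xi> $ j))"

text \<open>\<open>hc h\<close> stands for \<open>h(c)\<close>. Polynomials are sent to the corresponding polynomial in
  \<open>c\<close>: by linearity and multiplicativity this is equivalent to sending the constant \<open>1\<close>
  to the identity on \<open>D\<close> and each coordinate function \<open>\<xi>_j\<close> to \<open>c_j\<close>.\<close>
definition weak_hyperop ::
  "('n::finite \<Rightarrow> 'x::complex_banach \<Rightarrow> 'x) \<Rightarrow> 'x set \<Rightarrow> ((real ^ 'n \<Rightarrow> complex) \<Rightarrow> 'x \<Rightarrow> 'x) \<Rightarrow> bool"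
  where
  "weak_hyperop c D hc \<longleftrightarrow>
     csubspace D \<and> closure D = UNIV
   \<and> (\<forall>j. (\<forall>x\<in>D. c j x \<in> D) \<and> clinear_on D (c j))
   \<and> tuple_closable D c
   \<and> (\<forall>h. smooth h \<longrightarrow> (\<forall>x\<in>D. hc h x \<in> D) \<and> clinear_on D (hc h) \<and> closable D (hc h))
   \<and> (\<forall>h g. smooth h \<longrightarrow> smooth g \<longrightarrow> (\<forall>x\<in>D. hc (\<lambda>\<xi>. h \<xi> + g \<xi>) x = hc h x + hc g x))
   \<and> (\<forall>h a. smooth h \<longrightarrow> (\<forall>x\<in>D. hc (\<lambda>\<xi>. a * h \<xi>) x = scaleC a (hc h x)))
   \<and> (\<forall>h g. smooth h \<longrightarrow> smooth g \<longrightarrow> (\<forall>x\<in>D. hc (\<lambda>\<xi>. h \<xi> * g \<xi>) x = hc h (hc g x)))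
   \<and> (\<forall>x\<in>D. hc (\<lambda>_. 1) x = x)
   \<and> (\<forall>j. \<forall>x\<in>D. hc (coord j) x = c j x)
   \<and> (\<forall>hs h. (\<forall>k. smooth (hs k)) \<longrightarrow> smooth h \<longrightarrow> conv_E hs h \<longrightarrow>
          (\<forall>x\<in>D. (\<lambda>k. hc (hs k) x) \<longlonglongrightarrow> hc h x))"

definition hyperop :: "((real ^ 'n::finite \<Rightarrow> complex) \<Rightarrow> 'x::complex_banach \<Rightarrow> 'x) \<Rightarrow> bool" where
  "hyperop A \<longleftrightarrow>
     (\<forall>\<phi>. test_fun \<phi> \<longrightarrow> bounded_cop (A \<phi>))
   \<and> (\<forall>\<phi> \<psi>. test_fun \<phi> \<longrightarrow> test_fun \<psi> \<longrightarrow> A (\<lambda>\<xi>. \<phi> \<xi> + \<psi> \<xi>) = (\<lambda>x. A \<phi> x + A \<psi> x))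
   \<and> (\<forall>\<phi> a. test_fun \<phi> \<longrightarrow> A (\<lambda>\<xi>. a * \<phi> \<xi>) = (\<lambda>x. scaleC a (A \<phi> x)))
   \<and> (\<forall>\<phi>s. (\<forall>j. test_fun (\<phi>s j)) \<longrightarrow> conv_D0 \<phi>s \<longrightarrow> (\<lambda>j. onorm (A (\<phi>s j))) \<longlonglongrightarrow> 0)
   \<and> (\<forall>\<phi> \<psi>. test_fun \<phi> \<longrightarrow> test_fun \<psi> \<longrightarrow> A (\<lambda>\<xi>. \<phi> \<xi> * \<psi> \<xi>) = A \<phi> \<circ> A \<psi>)
   \<and> closure (\<Union>\<phi>\<in>{\<phi>. test_fun \<phi>}. range (A \<phi>)) = UNIV
   \<and> (\<forall>x. (\<forall>\<phi>. test_fun \<phi> \<longrightarrow> A \<phi> x = 0) \<longrightarrow> x = 0)"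

definition hyper_dom :: "((real ^ 'n::finite \<Rightarrow> complex) \<Rightarrow> 'x \<Rightarrow> 'x) \<Rightarrow> 'x set" where
  "hyper_dom A = (\<Union>\<phi>\<in>{\<phi>. test_fun \<phi>}. range (A \<phi>))"

text \<open>The associated tuple \<open>a'\<close>: \<open>a'_j x = A(\<xi>_j \<phi>) y\<close> whenever \<open>x = A(\<phi>) y\<close>
  (well defined for a hyperoperator).\<close>
definition assoc_tuple :: "((real ^ 'n::finite \<Rightarrow> complex) \<Rightarrow> 'x \<Rightarrow> 'x) \<Rightarrow> 'n \<Rightarrow> 'x \<Rightarrow> 'x" where
  "assoc_tuple A j x = (SOME z. \<exists>\<phi> y. test_fun \<phi> \<and> x = A \<phi> y \<and> z = A (\<lambda>\<xi>. coord j \<xi> * \<phi> \<xi>) y)"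

end

theory Submission
  imports Defs "HOL-Computational_Algebra.Polynomial"
begin

abbreviation lf :: "(real^'n::finite \<Rightarrow> complex) \<Rightarrow> real^'n \<Rightarrow> 'n \<Rightarrow> real \<Rightarrow> complex" where
  "lf f x i \<equiv> (\<lambda>t. f (x + t *\<^sub>R axis i 1))"

inductive_set alg :: "(real^'n::finite \<Rightarrow> complex) set \<Rightarrow> (real^'n \<Rightarrow> complex) set" for B where
  alg_base: "b \<in> B \<Longrightarrow> b \<in> alg B"
| alg_const: "(\<lambda>_. c) \<in> alg B"
| alg_add: "f \<in> alg B \<Longrightarrow> g \<in> alg B \<Longrightarrow> (\<lambda>x. f x + g x) \<in> alg B"
| alg_mult: "f \<in> alg B \<Longrightarrow> g \<in> alg B \<Longrightarrow> (\<lambda>x. f x * g x) \<in> alg B"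
| alg_inv: "f \<in> alg B \<Longrightarrow> (\<forall>x. f x \<noteq> 0) \<Longrightarrow> (\<lambda>x. inverse (f x)) \<in> alg B"

definition goodf :: "(real^'n::finite \<Rightarrow> complex) set \<Rightarrow> (real^'n \<Rightarrow> complex) \<Rightarrow> bool" where
  "goodf S f \<longleftrightarrow> continuous_on UNIV f \<and>
     (\<forall>i. \<exists>g\<in>S. \<forall>x. (lf f x i has_vector_derivative g x) (at 0))"

lemma alg_good:
  assumes B: "\<And>b. b \<in> B \<Longrightarrow> goodf (alg B) b"
  assumes f: "f \<in> alg B"
  shows "goodf (alg B) f"
  using f
proof induction
  case (alg_base b) then show ?case using B by blast
next
  case (alg_const c) then show ?case unfolding goodf_def
    by (auto intro!: bexI[of _ "\<lambda>_. 0"] alg.alg_const)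
next
  case (alg_add f g)
  show ?case unfolding goodf_def
  proof safe
    show "continuous_on UNIV (\<lambda>x. f x + g x)" using alg_add by (auto simp: goodf_def intro: continuous_intros)
    fix i
    obtain f' where f': "f' \<in> alg B" "\<And>x. (lf f x i has_vector_derivative f' x) (at 0)" using alg_add unfolding goodf_def by blast
    obtain g' where g': "g' \<in> alg B" "\<And>x. (lf g x i has_vector_derivative g' x) (at 0)" using alg_add unfolding goodf_def by blast
    show "\<exists>h\<in>alg B. \<forall>x. (lf (\<lambda>x. f x + g x) x i has_vector_derivative h x) (at 0)"
      by (rule bexI[of _ "\<lambda>x. f' x + g' x"]) (auto intro!: alg.alg_add f' g' has_vector_derivative_add)
  qed
next
  case (alg_mult f g)
  show ?case unfolding goodf_def
  proof safe
    show "continuous_on UNIV (\<lambda>x. f x * g x)" using alg_mult by (auto simp: goodf_def intro: continuous_intros)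
    fix i
    obtain f' where f': "f' \<in> alg B" "\<And>x. (lf f x i has_vector_derivative f' x) (at 0)" using alg_mult unfolding goodf_def by blast
    obtain g' where g': "g' \<in> alg B" "\<And>x. (lf g x i has_vector_derivative g' x) (at 0)" using alg_mult unfolding goodf_def by blast
    show "\<exists>h\<in>alg B. \<forall>x. (lf (\<lambda>x. f x * g x) x i has_vector_derivative h x) (at 0)"
    proof (rule bexI[of _ "\<lambda>x. f x * g' x + f' x * g x"], safe)
      fix x
      show "(lf (\<lambda>x. f x * g x) x i has_vector_derivative f x * g' x + f' x * g x) (at 0)"
        using has_vector_derivative_mult[OF f'(2)[of x] g'(2)[of x]] by simp
    qed (auto intro!: alg.alg_add alg.alg_mult f' g' alg_mult)
  qed
next
  case (alg_inv f)
  show ?case unfolding goodf_def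
  proof safe
    show "continuous_on UNIV (\<lambda>x. inverse (f x))" using alg_inv by (auto simp: goodf_def intro: continuous_intros)
    fix i
    obtain f' where f': "f' \<in> alg B" "\<And>x. (lf f x i has_vector_derivative f' x) (at 0)" using alg_inv unfolding goodf_def by blast
    show "\<exists>h\<in>alg B. \<forall>x. (lf (\<lambda>x. inverse (f x)) x i has_vector_derivative h x) (at 0)"
    proof (rule bexI[of _ "\<lambda>x. (\<lambda>_. -1) x * (f' x * ((\<lambda>x. inverse (f x)) x * (\<lambda>x. inverse (f x)) x))"], safe)
      fix x
      have d: "(inverse has_field_derivative - (inverse (f x) * 1 * inverse (f x))) (at (lf f x i 0))"
        using DERIV_inverse'[OF DERIV_ident, of "f x" UNIV] alg_inv by simp
      show "(lf (\<lambda>x. inverse (f x)) x i has_vector_derivative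
          (\<lambda>_. -1) x * (f' x * ((\<lambda>x. inverse (f x)) x * (\<lambda>x. inverse (f x)) x))) (at 0)"
        using field_vector_diff_chain_at[OF f'(2)[of x] d] by (simp add: o_def)
    next
      have inv: "(\<lambda>x. inverse (f x)) \<in> alg B" using alg_inv by (intro alg.alg_inv)
      show "(\<lambda>x. (\<lambda>_. -1) x * (f' x * ((\<lambda>x. inverse (f x)) x * (\<lambda>x. inverse (f x)) x))) \<in> alg B"
        using alg.alg_mult[OF alg.alg_const[where c="-1"] alg.alg_mult[OF f'(1) alg.alg_mult[OF inv inv]]] by simp
    qed
  qed
qed

lemma alg_smooth:
  assumes B: "\<And>b. b \<in> B \<Longrightarrow> goodf (alg B) b"
  assumes f: "f \<in> alg B"
  shows "smooth f"
proof -
  have *: "dpart ds f \<in> alg B" for "ds"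
  proof (induction "ds")
    case Nil then show ?case using f by simp
  next
    case (Cons i "ds")
    obtain g where g: "g \<in> alg B" "\<And>x. (lf (dpart ds f) x i has_vector_derivative g x) (at 0)"
      using alg_good[OF B Cons] unfolding goodf_def by blast
    have "dpart (i # ds) f = g"
      by (auto simp: fun_eq_iff partial_def vector_derivative_at[OF g(2)])
    then show ?case using g by simp
  qed
  show ?thesis unfolding smooth_def
  proof safe
    fix "ds"
    show "continuous_on UNIV (dpart ds f)" using alg_good[OF B *[of "ds"]] by (simp add: goodf_def)
    fix i x
    show "lf (dpart ds f) x i differentiable at 0"
      using alg_good[OF B *[of "ds"]] unfolding goodf_def differentiable_def has_vector_derivative_def by blast
  qed
qed

lemma smooth_partial:
  assumes "smooth f"
  shows "(lf (dpart ds f) x i has_vector_derivative dpart (i # ds) f x) (at 0)"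
proof -
  have "lf (dpart ds f) x i differentiable at 0" using assms by (simp add: smooth_def)
  then show ?thesis by (simp add: partial_def vector_derivative_works[THEN iffD1])
qed

lemma smooth_goodf:
  assumes "smooth f"
  shows "goodf (alg (range (\<lambda>ds. dpart ds f) \<union> B)) (dpart ds f)"
  unfolding goodf_def
proof safe
  show "continuous_on UNIV (dpart ds f)" using assms by (simp add: smooth_def)
  fix i
  show "\<exists>g\<in>alg (range (\<lambda>ds. dpart ds f) \<union> B). \<forall>x. (lf (dpart ds f) x i has_vector_derivative g x) (at 0)"
  proof -
    have m: "dpart (i#ds) f \<in> alg (range (\<lambda>ds. dpart ds f) \<union> B)" by (rule alg_base) blast
    show ?thesis using m smooth_partial[OF assms] by blast
  qed
qed

lemma smooth_mult:
  assumes "smooth f" "smooth g"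
  shows "smooth (\<lambda>x. f x * g x)"
proof -
  let ?B = "range (\<lambda>ds. dpart ds f) \<union> range (\<lambda>ds. dpart ds g)"
  have B: "goodf (alg ?B) b" if "b \<in> ?B" for b
  proof -
    from that consider "ds" where "b = dpart ds f" | "ds" where "b = dpart ds g" by blast
    then show ?thesis
    proof cases
      case 1 then show ?thesis using smooth_goodf[OF assms(1), where B="range (\<lambda>ds. dpart ds g)"] by simp
    next
      case 2 then show ?thesis using smooth_goodf[OF assms(2), where B="range (\<lambda>ds. dpart ds f)"] by (simp add: Un_commute)
    qed
  qed
  have "f \<in> alg ?B" "g \<in> alg ?B" using alg_base[of f ?B] alg_base[of g ?B]
    by (metis UnI1 UnI2 dpart.simps(1) rangeI)+
  then show ?thesis by (intro alg_smooth[OF B] alg_mult)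
qed

lemma smooth_add:
  assumes "smooth f" "smooth g"
  shows "smooth (\<lambda>x. f x + g x)" and "dpart ds (\<lambda>x. f x + g x) = (\<lambda>x. dpart ds f x + dpart ds g x)"
proof -
  show "dpart ds (\<lambda>x. f x + g x) = (\<lambda>x. dpart ds f x + dpart ds g x)"
  proof (induction "ds")
    case (Cons i "ds")
    show ?case
    proof
      fix x
      have "(lf (\<lambda>x. dpart ds f x + dpart ds g x) x i has_vector_derivative dpart (i#ds) f x + dpart (i#ds) g x) (at 0)"
        using has_vector_derivative_add[OF smooth_partial[OF assms(1)] smooth_partial[OF assms(2)]] .
      then show "dpart (i # ds) (\<lambda>x. f x + g x) x = dpart (i # ds) f x + dpart (i # ds) g x"
        by (simp add: Cons partial_def vector_derivative_at)
    qed
  qed simp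
  let ?B = "range (\<lambda>ds. dpart ds f) \<union> range (\<lambda>ds. dpart ds g)"
  have B: "goodf (alg ?B) b" if "b \<in> ?B" for b
  proof -
    from that consider "ds" where "b = dpart ds f" | "ds" where "b = dpart ds g" by blast
    then show ?thesis
    proof cases
      case 1 then show ?thesis using smooth_goodf[OF assms(1), where B="range (\<lambda>ds. dpart ds g)"] by simp
    next
      case 2 then show ?thesis using smooth_goodf[OF assms(2), where B="range (\<lambda>ds. dpart ds f)"] by (simp add: Un_commute)
    qed
  qed
  have "f \<in> alg ?B" "g \<in> alg ?B" using alg_base[of f ?B] alg_base[of g ?B]
    by (metis UnI1 UnI2 dpart.simps(1) rangeI)+
  then show "smooth (\<lambda>x. f x + g x)" by (intro alg_smooth[OF B] alg_add)
qed

lemma smooth_cmult: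
  assumes "smooth f"
  shows "smooth (\<lambda>x. a * f x)" and "dpart ds (\<lambda>x. a * f x) = (\<lambda>x. a * dpart ds f x)"
proof -
  show "dpart ds (\<lambda>x. a * f x) = (\<lambda>x. a * dpart ds f x)"
  proof (induction "ds")
    case (Cons i "ds")
    show ?case
    proof
      fix x
      have "(lf (\<lambda>x. a * dpart ds f x) x i has_vector_derivative a * dpart (i#ds) f x) (at 0)"
        using has_vector_derivative_mult_right[OF smooth_partial[OF assms(1)]] .
      then show "dpart (i # ds) (\<lambda>x. a * f x) x = a * dpart (i # ds) f x"
        by (simp add: Cons partial_def vector_derivative_at)
    qed
  qed simp
  have "smooth (\<lambda>x. (\<lambda>_. a) x * f x)"
    by (rule smooth_mult[OF _ assms]) (rule alg_smooth[of "{}"], auto intro: alg_const)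
  then show "smooth (\<lambda>x. a * f x)" by simp
qed

lemma smooth_const: "smooth (\<lambda>_. c)"
  by (rule alg_smooth[of "{}"]) (auto intro: alg_const)

lemma dpart_const: "dpart ds (\<lambda>_. c) = (\<lambda>_. if ds = [] then c else 0)"
proof (induction "ds")
  case (Cons i "ds")
  show ?case by (simp add: Cons.IH partial_def fun_eq_iff vector_derivative_at[OF has_vector_derivative_const])
qed simp

lemma lf_shift:
  assumes "(lf h (x + t *\<^sub>R axis i 1) i has_vector_derivative D) (at 0)"
  shows "(lf h x i has_vector_derivative D) (at t)"
proof -
  have eq: "lf h x i = lf h (x + t *\<^sub>R axis i 1) i \<circ> (\<lambda>s. s - t)"
    by (auto simp: fun_eq_iff algebra_simps)
  have d: "((\<lambda>s. s - t) has_vector_derivative 1) (at t)"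
    by (auto intro!: derivative_eq_intros)
  show ?thesis unfolding eq using vector_diff_chain_at[OF d, of "lf h (x + t *\<^sub>R axis i 1) i" D] assms
    by simp
qed

lemma smooth_limit:
  assumes sm: "\<And>N. smooth (F N)"
    and ul: "\<And>ds. uniform_limit UNIV (\<lambda>N. dpart ds (F N)) (G ds) sequentially"
  shows "dpart ds (G []) = G ds" "smooth (G [])"
proof -
  have key: "(lf (G ds) x i has_vector_derivative G (i#ds) x) (at 0)" for "ds" x i
  proof -
    let ?e = "axis i 1 :: real^_"
    have derf: "((\<lambda>t. dpart ds (F N) (x + t *\<^sub>R ?e)) has_derivative
        (\<lambda>h. h *\<^sub>R dpart (i#ds) (F N) (x + t *\<^sub>R ?e))) (at t within UNIV)" for N t
      using lf_shift[OF smooth_partial[OF sm, where ds=ds and x="x + t *\<^sub>R ?e" and i=i]]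
      by (simp add: has_vector_derivative_def)
    have nle: "\<forall>\<^sub>F N in sequentially. \<forall>t\<in>UNIV. \<forall>h. norm (h *\<^sub>R dpart (i#ds) (F N) (x + t *\<^sub>R ?e)
        - h *\<^sub>R G (i#ds) (x + t *\<^sub>R ?e)) \<le> e * norm h" if "e > 0" for e
    proof -
      have "\<forall>\<^sub>F N in sequentially. \<forall>y\<in>UNIV. dist (dpart (i#ds) (F N) y) (G (i#ds) y) < e"
        using uniform_limitD[OF ul that] .
      then show ?thesis
      proof eventually_elim
        case (elim N)
        show ?case
        proof (intro ballI allI)
          fix t h
          have "norm (h *\<^sub>R dpart (i#ds) (F N) (x + t *\<^sub>R ?e) - h *\<^sub>R G (i#ds) (x + t *\<^sub>R ?e))
              = \<bar>h\<bar> * dist (dpart (i#ds) (F N) (x + t *\<^sub>R ?e)) (G (i#ds) (x + t *\<^sub>R ?e))"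
            by (simp add: dist_norm flip: scaleR_diff_right)
          also have "\<dots> \<le> \<bar>h\<bar> * e" using elim by (intro mult_left_mono) (auto intro: less_imp_le)
          finally show "norm (h *\<^sub>R dpart (i#ds) (F N) (x + t *\<^sub>R ?e) - h *\<^sub>R G (i#ds) (x + t *\<^sub>R ?e)) \<le> e * norm h"
            by (simp add: mult.commute)
        qed
      qed
    qed
    have lim: "(\<lambda>N. dpart ds (F N) (x + 0 *\<^sub>R ?e)) \<longlonglongrightarrow> G ds (x + 0 *\<^sub>R ?e)"
      using tendsto_uniform_limitI[OF ul] by simp
    obtain g where g: "\<And>t. (\<lambda>N. dpart ds (F N) (x + t *\<^sub>R ?e)) \<longlonglongrightarrow> g t"
      "\<And>t. (g has_derivative (\<lambda>h. h *\<^sub>R G (i#ds) (x + t *\<^sub>R ?e))) (at t within UNIV)"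
      using has_derivative_sequence[OF convex_UNIV derf nle UNIV_I lim] by blast
    have "g t = G ds (x + t *\<^sub>R ?e)" for t
      using LIMSEQ_unique[OF g(1) tendsto_uniform_limitI[OF ul]] by simp
    then have "g = lf (G ds) x i" by auto
    then show ?thesis using g(2)[of 0] by (simp add: has_vector_derivative_def)
  qed
  have dp: "dpart ds (G []) = G ds" for "ds"
  proof (induction "ds")
    case (Cons i "ds")
    show ?case by (auto simp: fun_eq_iff Cons partial_def vector_derivative_at[OF key])
  qed simp
  then show "dpart ds (G []) = G ds" .
  show "smooth (G [])" unfolding smooth_def
  proof safe
    fix "ds"
    show "continuous_on UNIV (dpart ds (G []))" unfolding dp
      by (rule uniform_limit_theorem[OF _ ul]) (use sm in \<open>auto simp: smooth_def\<close>)
    fix i x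
    show "lf (dpart ds (G [])) x i differentiable at 0"
      unfolding dp using key by (auto simp: differentiable_def has_vector_derivative_def)
  qed
qed

lemma smooth_sum:
  assumes "\<And>m. smooth (f m)"
  shows "smooth (\<lambda>x. \<Sum>m<(N::nat). f m x) \<and> (\<forall>ds. dpart ds (\<lambda>x. \<Sum>m<N. f m x) = (\<lambda>x. \<Sum>m<N. dpart ds (f m) x))"
proof (induction N)
  case 0 then show ?case by (simp add: smooth_const dpart_const)
next
  case (Suc N)
  then show ?case using smooth_add[OF _ assms[of N]] by simp
qed

lemma smooth_series:
  assumes sm: "\<And>m. smooth (f m)"
    and bd: "\<And>ds. \<exists>M. summable M \<and> (\<forall>\<^sub>F m in sequentially. \<forall>x. norm (dpart ds (f m) x) \<le> M m)"
  shows "smooth (\<lambda>x. \<Sum>m. f m x)"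
    and "dpart ds (\<lambda>x. \<Sum>m. f m x) = (\<lambda>x. \<Sum>m. dpart ds (f m) x)"
    and "uniform_limit UNIV (\<lambda>N. dpart ds (\<lambda>x. \<Sum>m<N. f m x)) (\<lambda>x. \<Sum>m. dpart ds (f m) x) sequentially"
proof -
  have ul: "uniform_limit UNIV (\<lambda>N. dpart ds (\<lambda>x. \<Sum>m<N. f m x)) (\<lambda>x. \<Sum>m. dpart ds (f m) x) sequentially" for "ds"
  proof -
    obtain M where M: "summable M" "\<forall>\<^sub>F m in sequentially. \<forall>x. norm (dpart ds (f m) x) \<le> M m"
      using bd by blast
    show ?thesis using smooth_sum[where f=f, OF sm] Weierstrass_m_test_ev[of UNIV "\<lambda>m. dpart ds (f m)" M] M by simp
  qed
  then show "uniform_limit UNIV (\<lambda>N. dpart ds (\<lambda>x. \<Sum>m<N. f m x)) (\<lambda>x. \<Sum>m. dpart ds (f m) x) sequentially" .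
  have sN: "smooth (\<lambda>x. \<Sum>m<N. f m x)" for N using smooth_sum[where f=f, OF sm] by blast
  show "smooth (\<lambda>x. \<Sum>m. f m x)" using smooth_limit(2)[OF sN ul] by simp
  show "dpart ds (\<lambda>x. \<Sum>m. f m x) = (\<lambda>x. \<Sum>m. dpart ds (f m) x)" using smooth_limit(1)[OF sN ul] by simp
qed

fun Pk :: "nat \<Rightarrow> real poly" where
  "Pk 0 = 1"
| "Pk (Suc k) = [:0,0,1:] * (Pk k - pderiv (Pk k))"

definition sfun :: "nat \<Rightarrow> real \<Rightarrow> real" where
  "sfun k t = (if t > 0 then poly (Pk k) (1/t) * exp (-(1/t)) else 0)"

lemma poly_exp_lim: "((\<lambda>u. poly (p::real poly) u * u * exp (-u)) \<longlongrightarrow> 0) at_top"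
proof -
  have eq: "poly p u * u * exp (-u) = (\<Sum>i\<le>degree p. coeff p i * (u ^ Suc i / exp u))" for u :: real
    by (simp add: poly_altdef sum_distrib_left exp_minus divide_inverse mult_ac)
  have "((\<lambda>u. \<Sum>i\<le>degree p. coeff p i * (u ^ Suc i / exp u)) \<longlongrightarrow> (\<Sum>i\<le>degree p. coeff p i * 0)) at_top"
    by (intro tendsto_sum tendsto_mult tendsto_const tendsto_power_div_exp_0)
  then show ?thesis unfolding eq by simp
qed

lemma sfun_deriv: "(sfun k has_real_derivative sfun (Suc k) t) (at t)"
proof (cases "t = 0")
  case True
  have r: "((\<lambda>y. (sfun k y - sfun k 0) / (y - 0)) \<longlongrightarrow> 0) (at_right 0)"
  proof -
    have "((\<lambda>u. poly (Pk k) u * u * exp (-u)) \<longlongrightarrow> 0) at_top" by (rule poly_exp_lim)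
    then have "((\<lambda>x. (sfun k (inverse x) - sfun k 0) / (inverse x - 0)) \<longlongrightarrow> 0) at_top"
    proof (rule Lim_transform_eventually)
      show "\<forall>\<^sub>F x in at_top. poly (Pk k) x * x * exp (- x) = (sfun k (inverse x) - sfun k 0) / (inverse x - 0)"
        using eventually_gt_at_top[of 0] by eventually_elim (simp add: sfun_def field_simps)
    qed
    then show ?thesis by (simp add: filterlim_at_right_to_top)
  qed
  have l: "((\<lambda>y. (sfun k y - sfun k 0) / (y - 0)) \<longlongrightarrow> 0) (at_left 0)"
  proof (rule Lim_transform_eventually[OF tendsto_const])
    show "\<forall>\<^sub>F x in at_left 0. 0 = (sfun k x - sfun k 0) / (x - 0)"
      unfolding eventually_at_left_field by (auto intro!: exI[of _ "-1"] simp: sfun_def)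
  qed
  have "(sfun k has_real_derivative 0) (at 0)"
    unfolding has_field_derivative_iff using l r by (simp add: filterlim_at_split)
  then show ?thesis using True by (simp add: sfun_def)
next
  case False
  show ?thesis
  proof (cases "t > 0")
    case True
    have d: "((\<lambda>t. poly (Pk k) (1/t) * exp (-(1/t))) has_real_derivative sfun (Suc k) t) (at t)"
    proof -
      have "((\<lambda>t. poly (Pk k) (1/t) * exp (-(1/t))) has_real_derivative
         poly (pderiv (Pk k)) (1/t) * (- (1/t^2)) * exp (-(1/t)) + poly (Pk k) (1/t) * (exp (-(1/t)) * (1/t^2))) (at t)"
        using True by (auto intro!: derivative_eq_intros DERIV_chain2[OF poly_DERIV] simp: power2_eq_square field_simps)
      moreover have "poly (pderiv (Pk k)) (1/t) * (- (1/t^2)) * exp (-(1/t)) + poly (Pk k) (1/t) * (exp (-(1/t)) * (1/t^2))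
          = sfun (Suc k) t"
        using True by (simp add: sfun_def field_simps power2_eq_square)
      ultimately show ?thesis by simp
    qed
    show ?thesis
      by (rule has_field_derivative_transform_within_open[OF d, where S="{0<..}"]) (use True in \<open>auto simp: sfun_def\<close>)
  next
    case neg: False
    with False have "t < 0" by simp
    have d: "((\<lambda>_. 0) has_real_derivative 0) (at t)" by simp
    have "(sfun k has_real_derivative 0) (at t)"
      by (rule has_field_derivative_transform_within_open[OF d, where S="{..<0}"]) (use \<open>t < 0\<close> in \<open>auto simp: sfun_def\<close>)
    then show ?thesis using \<open>t < 0\<close> by (simp add: sfun_def)
  qed
qed

lemma sfun_cont: "continuous_on UNIV (sfun k)"
  by (rule continuous_at_imp_continuous_on) (auto intro: DERIV_isCont[OF sfun_deriv])

lemma sfun_nonneg: "sfun 0 t \<ge> 0" and sfun_pos: "t > 0 \<Longrightarrow> sfun 0 t > 0"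
  by (auto simp: sfun_def)

definition bumpB :: "(real^'n::finite \<Rightarrow> complex) set" where
  "bumpB = range coord \<union> {(\<lambda>\<xi>. complex_of_real (sfun k (a + b * (\<xi> \<bullet> \<xi>)))) | k a b. True}"

lemma bumpB_good:
  assumes "f \<in> (bumpB :: (real^'n::finite \<Rightarrow> complex) set)"
  shows "goodf (alg bumpB) f"
  using assms unfolding bumpB_def
proof (elim UnE rangeE CollectE exE conjE)
  fix j :: 'n
  assume f: "f = coord j"
  show "goodf (alg (range coord \<union> {(\<lambda>\<xi>. complex_of_real (sfun k (a + b * (\<xi> \<bullet> \<xi>)))) | k a b. True})) f"
    unfolding goodf_def f
  proof safe
    show "continuous_on UNIV (coord j :: real^'n \<Rightarrow> complex)" unfolding coord_def by (intro continuous_intros)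
    fix i
    show "\<exists>g\<in>alg (range coord \<union> {(\<lambda>\<xi>. complex_of_real (sfun k (a + b * (\<xi> \<bullet> \<xi>)))) | k a b. True}).
        \<forall>x. (lf (coord j) x i has_vector_derivative g x) (at 0)"
    proof (rule bexI[of _ "\<lambda>_. complex_of_real (axis i 1 $ j)"], safe)
      fix x :: "real^'n"
      have "((\<lambda>t. x $ j + t * axis i 1 $ j) has_real_derivative axis i 1 $ j) (at 0)"
        by (auto intro!: derivative_eq_intros)
      from has_vector_derivative_of_real[OF this]
      show "(lf (coord j) x i has_vector_derivative complex_of_real (axis i 1 $ j)) (at 0)"
        by (simp add: coord_def)
    qed (rule alg_const)
  qed
next
  fix k a b
  assume f: "f = (\<lambda>\<xi>::real^'n. complex_of_real (sfun k (a + b * (\<xi> \<bullet> \<xi>))))"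
  let ?B = "range coord \<union> {(\<lambda>\<xi>::real^'n. complex_of_real (sfun k (a + b * (\<xi> \<bullet> \<xi>)))) | k a b. True}"
  show "goodf (alg ?B) f"
    unfolding goodf_def f
  proof safe
    show "continuous_on UNIV (\<lambda>\<xi>::real^'n. complex_of_real (sfun k (a + b * (\<xi> \<bullet> \<xi>))))"
      by (intro continuous_on_of_real continuous_on_compose2[OF sfun_cont] continuous_intros) auto
    fix i
    let ?g = "\<lambda>\<xi>::real^'n. (\<lambda>\<xi>. complex_of_real (sfun (Suc k) (a + b * (\<xi> \<bullet> \<xi>)))) \<xi> *
                ((\<lambda>_. complex_of_real (2 * b)) \<xi> * coord i \<xi>)"
    have mem: "?g \<in> alg ?B"
      by (intro alg_mult alg_const alg_base) auto
    show "\<exists>g\<in>alg ?B. \<forall>x. (lf (\<lambda>\<xi>. complex_of_real (sfun k (a + b * (\<xi> \<bullet> \<xi>)))) x i has_vector_derivative g x) (at 0)"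
    proof (rule bexI[OF _ mem], safe)
      fix x :: "real^'n"
      have eq: "(x + t *\<^sub>R axis i 1) \<bullet> (x + t *\<^sub>R axis i 1) = x \<bullet> x + 2 * t * x $ i + t^2" for t
        by (simp add: inner_add_left inner_add_right inner_axis inner_axis' inner_commute power2_eq_square
            algebra_simps)
      have d1: "((\<lambda>t. a + b * (x \<bullet> x + 2 * t * x $ i + t^2)) has_real_derivative b * (2 * x $ i)) (at 0)"
        by (auto intro!: derivative_eq_intros)
      have d: "((\<lambda>t. sfun k (a + b * (x \<bullet> x + 2 * t * x $ i + t^2))) has_real_derivative
          sfun (Suc k) (a + b * (x \<bullet> x)) * (b * (2 * x $ i))) (at 0)"
        using DERIV_chain2[OF sfun_deriv d1] by simp
      have d2: "((\<lambda>t. complex_of_real (sfun k (a + b * (x \<bullet> x + 2 * t * x $ i + t^2)))) has_vector_derivative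
          complex_of_real (sfun (Suc k) (a + b * (x \<bullet> x)) * (b * (2 * x $ i)))) (at 0)"
        by (rule has_vector_derivative_of_real[OF d])
      have e2: "complex_of_real (sfun (Suc k) (a + b * (x \<bullet> x)) * (b * (2 * x $ i))) = ?g x"
        by (simp add: coord_def)
      show "(lf (\<lambda>\<xi>. complex_of_real (sfun k (a + b * (\<xi> \<bullet> \<xi>)))) x i has_vector_derivative ?g x) (at 0)"
        using d2 unfolding eq e2 .
    qed
  qed
qed

lemma bump_exists:
  fixes R :: real
  assumes "R \<ge> 0"
  obtains \<psi> q h :: "real^'n::finite \<Rightarrow> complex"
  where "test_fun \<psi>" "smooth q" "smooth h" "smooth (\<lambda>\<xi>. \<psi> \<xi> + q \<xi>)"
    "\<And>\<xi>. (\<psi> \<xi> + q \<xi>) * h \<xi> = 1" "\<And>\<xi>. norm \<xi> < R \<Longrightarrow> q \<xi> = 0"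
proof -
  define \<psi> where "\<psi> = (\<lambda>\<xi>::real^'n. complex_of_real (sfun 0 ((R+1)^2 + (-1) * (\<xi> \<bullet> \<xi>))))"
  define q where "q = (\<lambda>\<xi>::real^'n. complex_of_real (sfun 0 (-(R^2) + 1 * (\<xi> \<bullet> \<xi>))))"
  have pa: "\<psi> \<in> alg bumpB" "q \<in> alg bumpB" unfolding \<psi>_def q_def bumpB_def by (intro alg_base; blast)+
  have pos: "\<psi> \<xi> + q \<xi> \<noteq> 0" for \<xi>
  proof -
    have "sfun 0 ((R+1)^2 + (-1) * (\<xi> \<bullet> \<xi>)) + sfun 0 (-(R^2) + 1 * (\<xi> \<bullet> \<xi>)) > 0"
    proof (cases "\<xi> \<bullet> \<xi> < (R+1)^2")
      case True then show ?thesis using sfun_pos[of "(R+1)^2 + (-1) * (\<xi> \<bullet> \<xi>)"] sfun_nonneg[of "-(R^2) + 1 * (\<xi> \<bullet> \<xi>)"] by simp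
    next
      case False
      have "R^2 < (R+1)^2" using assms by (simp add: power2_eq_square algebra_simps)
      with False show ?thesis using sfun_nonneg[of "(R+1)^2 + (-1) * (\<xi> \<bullet> \<xi>)"] sfun_pos[of "-(R^2) + 1 * (\<xi> \<bullet> \<xi>)"] by simp
    qed
    then show ?thesis unfolding \<psi>_def q_def
      by (metis less_irrefl of_real_0 of_real_add of_real_eq_iff)
  qed
  have sa: "(\<lambda>\<xi>. \<psi> \<xi> + q \<xi>) \<in> alg bumpB" using pa by (rule alg_add)
  have ha: "(\<lambda>\<xi>. inverse (\<psi> \<xi> + q \<xi>)) \<in> alg bumpB" using sa pos by (intro alg_inv) auto
  have sm: "smooth f" if "f \<in> alg bumpB" for f by (rule alg_smooth[OF bumpB_good that])
  have supp: "tsupport \<psi> \<subseteq> cball 0 (R+1)"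
  proof -
    have "{x. \<psi> x \<noteq> 0} \<subseteq> cball 0 (R+1)"
    proof
      fix x assume "x \<in> {x. \<psi> x \<noteq> 0}"
      then have "(R+1)^2 + (-1) * (x \<bullet> x) > 0" unfolding \<psi>_def sfun_def by (auto split: if_splits)
      then have "norm x ^ 2 < (R+1)^2" by (simp add: power2_norm_eq_inner)
      then have "norm x < R + 1" using assms by (smt (verit) norm_ge_zero power_mono)
      then show "x \<in> cball 0 (R+1)" by simp
    qed
    then show ?thesis unfolding tsupport_def by (intro closure_minimal) auto
  qed
  show ?thesis
  proof (rule that[of \<psi> q "\<lambda>\<xi>. inverse (\<psi> \<xi> + q \<xi>)"])
    show "test_fun \<psi>" unfolding test_fun_def
      using sm[OF pa(1)] supp bounded_subset[OF bounded_cball supp]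
      by (auto simp: compact_eq_bounded_closed tsupport_def)
    show "smooth q" "smooth (\<lambda>\<xi>. inverse (\<psi> \<xi> + q \<xi>))" "smooth (\<lambda>\<xi>. \<psi> \<xi> + q \<xi>)"
      using sm pa ha sa by auto
    show "(\<psi> \<xi> + q \<xi>) * inverse (\<psi> \<xi> + q \<xi>) = 1" for \<xi> using pos[of \<xi>] by simp
    show "q \<xi> = 0" if "norm \<xi> < R" for \<xi>
    proof -
      have "norm \<xi> ^ 2 \<le> R^2" using that assms by (intro power_mono) auto
      then show ?thesis unfolding q_def sfun_def by (simp add: power2_norm_eq_inner)
    qed
  qed
qed

lemma scaleC_zero_right [simp]: "scaleC a (0::'x::complex_banach) = 0"
  using scaleC_add_right[of a "0::'x" 0] by simp

lemma scaleC_zero_left [simp]: "scaleC 0 (x::'x::complex_banach) = 0"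
  using scaleC_of_real[of 0 x] by simp

lemma scaleC_real: "scaleC (complex_of_real r) (x::'x::complex_banach) = r *\<^sub>R x"
  by (rule scaleC_of_real)

lemma clinear_on_zero:
  assumes "clinear_on S T" "0 \<in> S"
  shows "T 0 = 0"
  using assms unfolding clinear_on_def by (metis add_0 add_cancel_right_right)

lemma bounded_cop_linear:
  assumes "bounded_cop T"
  shows "bounded_linear T"
proof -
  from assms obtain K where K: "\<And>x. norm (T x) \<le> K * norm x" and l: "clinear_on UNIV T"
    unfolding bounded_cop_def by blast
  show ?thesis
  proof (rule bounded_linear_intro[where K=K])
    show "T (x + y) = T x + T y" for x y using l by (simp add: clinear_on_def)
    show "T (r *\<^sub>R x) = r *\<^sub>R T x" for r x
      using l unfolding clinear_on_def by (metis scaleC_of_real UNIV_I)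
    show "norm (T x) \<le> norm x * K" for x using K[of x] by (simp add: mult.commute)
  qed
qed

lemma bounded_cop_cont: "bounded_cop T \<Longrightarrow> continuous_on UNIV T"
  using bounded_cop_linear linear_continuous_on by blast

lemma scaleC_bounded_linear: "bounded_linear (\<lambda>x::'x::complex_banach. scaleC a x)"
proof (rule bounded_linear_intro[where K="cmod a"])
  show "scaleC a (x + y) = scaleC a x + scaleC a y" for x y :: 'x by (rule scaleC_add_right)
  show "scaleC a (r *\<^sub>R x) = r *\<^sub>R scaleC a x" for r and x :: 'x
    by (metis scaleC_of_real scaleC_scaleC mult.commute)
  show "norm (scaleC a x) \<le> norm x * cmod a" for x :: 'x by (simp add: norm_scaleC mult.commute)
qed

lemma graph_closure_cont:
  fixes f g :: "'a::metric_space \<Rightarrow> 'b::metric_space"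
  assumes f: "continuous_on UNIV f" and D: "closure D = UNIV" and eq: "\<And>x. x \<in> D \<Longrightarrow> g x = f x"
  shows "closure (op_graph D g) = op_graph UNIV f" "op_closure D g = f"
proof -
  have cl: "closed (op_graph UNIV f)"
  proof -
    have "op_graph UNIV f = {p. snd p = f (fst p)}" by (auto simp: op_graph_def)
    moreover have "closed {p. snd p = f (fst p)}"
      by (intro closed_Collect_eq continuous_intros continuous_on_compose2[OF f]) auto
    ultimately show ?thesis by simp
  qed
  have sub: "op_graph D g \<subseteq> op_graph UNIV f" using eq by (auto simp: op_graph_def)
  have "op_graph UNIV f \<subseteq> closure (op_graph D g)"
  proof
    fix p assume "p \<in> op_graph UNIV f"
    then obtain x where p: "p = (x, f x)" by (auto simp: op_graph_def)
    have "x \<in> closure D" using D by simp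
    then obtain s where s: "\<And>n. s n \<in> D" "s \<longlonglongrightarrow> x" unfolding closure_sequential by blast
    have "(\<lambda>n. (s n, g (s n))) \<longlonglongrightarrow> (x, f x)"
      using s eq continuous_on_tendsto_compose[OF f s(2)] by (auto intro!: tendsto_Pair)
    moreover have "(s n, g (s n)) \<in> op_graph D g" for n using s by (auto simp: op_graph_def)
    ultimately show "p \<in> closure (op_graph D g)" unfolding p closure_sequential
      by (intro exI[of _ "\<lambda>n. (s n, g (s n))"]) auto
  qed
  then show c: "closure (op_graph D g) = op_graph UNIV f"
    using closure_minimal[OF sub cl] by blast
  show "op_closure D g = f"
    unfolding op_closure_def c by (auto simp: op_graph_def fun_eq_iff)
qed

lemma weakD:
  assumes "weak_hyperop c D hc"
  shows "csubspace D" "closure D = UNIV"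
    "\<And>h x. smooth h \<Longrightarrow> x \<in> D \<Longrightarrow> hc h x \<in> D"
    "\<And>h. smooth h \<Longrightarrow> clinear_on D (hc h)"
    "\<And>h g x. smooth h \<Longrightarrow> smooth g \<Longrightarrow> x \<in> D \<Longrightarrow> hc (\<lambda>\<xi>. h \<xi> + g \<xi>) x = hc h x + hc g x"
    "\<And>h a x. smooth h \<Longrightarrow> x \<in> D \<Longrightarrow> hc (\<lambda>\<xi>. a * h \<xi>) x = scaleC a (hc h x)"
    "\<And>h g x. smooth h \<Longrightarrow> smooth g \<Longrightarrow> x \<in> D \<Longrightarrow> hc (\<lambda>\<xi>. h \<xi> * g \<xi>) x = hc h (hc g x)"
    "\<And>x. x \<in> D \<Longrightarrow> hc (\<lambda>_. 1) x = x"
    "\<And>j x. x \<in> D \<Longrightarrow> hc (coord j) x = c j x"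
    "\<And>hs h x. (\<And>k. smooth (hs k)) \<Longrightarrow> smooth h \<Longrightarrow> conv_E hs h \<Longrightarrow> x \<in> D \<Longrightarrow> (\<lambda>k. hc (hs k) x) \<longlonglongrightarrow> hc h x"
  using assms unfolding weak_hyperop_def by blast+

lemma csubspace_scaleR: "csubspace D \<Longrightarrow> x \<in> D \<Longrightarrow> r *\<^sub>R x \<in> D"
  unfolding csubspace_def by (metis scaleC_of_real)

lemma hc_zero:
  assumes "weak_hyperop c D hc" "x \<in> D"
  shows "hc (\<lambda>_. 0) x = 0"
  using weakD(6)[OF assms(1) smooth_const[of 1] assms(2), of 0] by simp

lemma hc_at_zero:
  assumes "weak_hyperop c D hc" "smooth h"
  shows "hc h 0 = 0"
  using clinear_on_zero[OF weakD(4)[OF assms]] weakD(1)[OF assms(1)] by (simp add: csubspace_def)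

lemma coord_smooth: "smooth (coord j)"
  by (rule alg_smooth[OF bumpB_good]) (auto intro: alg_base simp: bumpB_def)

lemma dpart_vanish:
  assumes "smooth h" "\<And>\<xi>. \<xi> \<in> ball 0 r \<Longrightarrow> h \<xi> = 0" "\<xi> \<in> ball 0 r"
  shows "dpart ds h \<xi> = 0"
  using assms(3)
proof (induction ds arbitrary: \<xi>)
  case Nil then show ?case using assms(2) by simp
next
  case (Cons i ds)
  let ?S = "{t::real. \<xi> + t *\<^sub>R axis i 1 \<in> ball 0 r}"
  have op: "open ?S"
    by (intro open_vimage[of "ball 0 r" "\<lambda>t. \<xi> + t *\<^sub>R axis i 1", unfolded vimage_def] continuous_intros) auto
  have "(lf (dpart ds h) \<xi> i has_vector_derivative 0) (at 0)"
    by (rule has_vector_derivative_transform_within_open[OF has_vector_derivative_const op])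
      (use Cons in auto)
  then show ?case by (simp add: partial_def vector_derivative_at)
qed

lemma vanishing:
  fixes hc :: "(real^'n::finite \<Rightarrow> complex) \<Rightarrow> 'x::complex_banach \<Rightarrow> 'x"
  assumes weak: "weak_hyperop c D hc" and x: "x \<in> D"
  shows "\<exists>R\<ge>0. \<forall>h. smooth h \<longrightarrow> (\<forall>\<xi>. norm \<xi> < R \<longrightarrow> h \<xi> = 0) \<longrightarrow> hc h x = 0"
proof (rule ccontr)
  assume "\<not> ?thesis"
  then have "\<forall>N::nat. \<exists>h. smooth h \<and> (\<forall>\<xi>. norm \<xi> < real N \<longrightarrow> h \<xi> = 0) \<and> hc h x \<noteq> 0"
    by (metis of_nat_0_le_iff)
  then obtain hs where hs: "\<And>N. smooth (hs N)" "\<And>N \<xi>. norm \<xi> < real N \<Longrightarrow> hs N \<xi> = 0"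
    "\<And>N. hc (hs N) x \<noteq> 0" by metis
  define a where "a N = complex_of_real (1 / norm (hc (hs N) x))" for N
  define gs where "gs N = (\<lambda>\<xi>. a N * hs N \<xi>)" for N
  have gsm: "smooth (gs N)" for N unfolding gs_def by (rule smooth_cmult(1)[OF hs(1)])
  have n1: "norm (hc (gs N) x) = 1" for N
  proof -
    have "hc (gs N) x = scaleC (a N) (hc (hs N) x)" unfolding gs_def by (rule weakD(6)[OF weak hs(1) x])
    then show ?thesis using hs(3)[of N] by (simp add: norm_scaleC a_def norm_divide)
  qed
  have conv: "conv_E gs (\<lambda>_. 0)"
    unfolding conv_E_def
  proof safe
    fix ds and K :: "(real^'n) set"
    assume "compact K"
    then obtain r where r: "K \<subseteq> ball 0 r" using bounded_subset_ballD compact_imp_bounded by blast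
    obtain N0 :: nat where N0: "r < real N0" using reals_Archimedean2 by blast
    show "uniform_limit K (\<lambda>k. dpart ds (gs k)) (dpart ds (\<lambda>_. 0)) sequentially"
    proof (rule uniform_limitI)
      fix e :: real assume "e > 0"
      show "\<forall>\<^sub>F n in sequentially. \<forall>\<xi>\<in>K. dist (dpart ds (gs n) \<xi>) (dpart ds (\<lambda>_. 0) \<xi>) < e"
        unfolding eventually_sequentially
      proof (intro exI[of _ N0] allI impI ballI)
        fix n \<xi> assume n: "N0 \<le> n" and "\<xi> \<in> K"
        have "\<xi> \<in> ball 0 r" using r \<open>\<xi> \<in> K\<close> by blast
        moreover have "r \<le> real n" using N0 n of_nat_mono[OF n] by linarith
        ultimately have \<xi>: "\<xi> \<in> ball 0 (real n)" by (simp add: subset_iff)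
        have "dpart ds (gs n) \<xi> = 0"
          using dpart_vanish[OF gsm[of n], where r="real n" and \<xi>=\<xi> and ds=ds] hs(2)[where N=n] \<xi> by (simp add: gs_def dist_norm)
        then show "dist (dpart ds (gs n) \<xi>) (dpart ds (\<lambda>_. 0) \<xi>) < e" using \<open>e > 0\<close> by (simp add: dpart_const)
      qed
    qed
  qed
  have "(\<lambda>k. hc (gs k) x) \<longlonglongrightarrow> hc (\<lambda>_. 0) x"
    by (rule weakD(10)[OF weak gsm smooth_const conv x])
  then have "(\<lambda>k. norm (hc (gs k) x)) \<longlonglongrightarrow> norm (0::'x)"
    unfolding hc_zero[OF weak x] by (rule tendsto_norm)
  then have "(\<lambda>k. 1::real) \<longlonglongrightarrow> 0" by (simp add: n1)
  then show False by (simp add: LIMSEQ_const_iff)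
qed

lemma approx_onorm:
  fixes T :: "'x::complex_banach \<Rightarrow> 'x"
  assumes bl: "bounded_linear T" and D: "closure D = UNIV" "csubspace D"
    and e: "e > 0" "onorm T \<ge> e"
  shows "\<exists>x\<in>D. norm x \<le> 1 \<and> norm (T x) \<ge> e / 2"
proof (rule ccontr)
  assume "\<not> ?thesis"
  then have lt: "\<And>x. x \<in> D \<Longrightarrow> norm x \<le> 1 \<Longrightarrow> norm (T x) < e / 2" by force
  interpret bounded_linear T by fact
  have inD: "norm (T x) \<le> e / 2 * norm x" if "x \<in> D" for x
  proof (cases "x = 0")
    case True then show ?thesis by (simp add: zero)
  next
    case False
    let ?y = "(1 / norm x) *\<^sub>R x"
    have "?y \<in> D" using csubspace_scaleR[OF D(2) that] .
    moreover have "norm ?y = 1" using False by simp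
    ultimately have "norm (T ?y) < e / 2" using lt by simp
    then have "norm (T x) / norm x < e / 2" by (simp add: scale)
    then show ?thesis using False by (simp add: field_simps)
  qed
  have cl: "closed {x. norm (T x) \<le> e / 2 * norm x}"
    by (intro closed_Collect_le continuous_on_norm[OF linear_continuous_on[OF bl]] continuous_intros)
  have "UNIV \<subseteq> {x. norm (T x) \<le> e / 2 * norm x}"
    using closure_minimal[OF _ cl, of D] inD D(1) by auto
  then have "onorm T \<le> e / 2" by (intro onorm_bound) (use e in auto)
  then show False using e by simp
qed

lemma gliding:
  fixes hc :: "(real^'n::finite \<Rightarrow> complex) \<Rightarrow> 'x::complex_banach \<Rightarrow> 'x"
    and A :: "(real^'n \<Rightarrow> complex) \<Rightarrow> 'x \<Rightarrow> 'x"
  assumes weak: "weak_hyperop c D hc"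
    and Abl: "\<And>\<phi>. test_fun \<phi> \<Longrightarrow> bounded_cop (A \<phi>)"
    and Aeq: "\<And>\<phi> x. test_fun \<phi> \<Longrightarrow> x \<in> D \<Longrightarrow> hc \<phi> x = A \<phi> x"
    and tf: "\<And>j. test_fun (\<phi>s j)" and cd: "conv_D0 \<phi>s"
  shows "(\<lambda>j. onorm (A (\<phi>s j))) \<longlonglongrightarrow> 0"
proof (rule ccontr)
  define T where "T j = A (\<phi>s j)" for j
  have bl: "bounded_linear (T j)" for j unfolding T_def using bounded_cop_linear[OF Abl[OF tf]] .
  have sm\<phi>: "smooth (\<phi>s j)" for j using tf[of j] by (simp add: test_fun_def)
  assume "\<not> (\<lambda>j. onorm (A (\<phi>s j))) \<longlonglongrightarrow> 0"
  then have "\<not> (\<forall>r>0. \<exists>no. \<forall>n\<ge>no. norm (onorm (T n) - 0) < r)"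
    unfolding LIMSEQ_iff T_def by simp
  then obtain \<epsilon> where \<epsilon>0: "\<epsilon> > 0" and fr: "\<And>no. \<exists>n\<ge>no. \<not> norm (onorm (T n) - 0) < \<epsilon>"
    by blast
  have \<epsilon>: "\<epsilon> > 0" "\<And>N. \<exists>j\<ge>N. onorm (T j) \<ge> \<epsilon>"
  proof -
    show "\<epsilon> > 0" by (rule \<epsilon>0)
    fix N
    obtain j where "j \<ge> N" "\<not> norm (onorm (T j) - 0) < \<epsilon>" using fr by blast
    moreover have "norm (onorm (T j) - 0) = onorm (T j)" using onorm_pos_le[OF bl[of j]] by simp
    ultimately show "\<exists>j\<ge>N. onorm (T j) \<ge> \<epsilon>" by (intro exI[of _ j]) auto
  qed
  obtain K0 where K0: "compact K0" "\<And>j. tsupport (\<phi>s j) \<subseteq> K0"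
    using cd unfolding conv_D0_def by blast
  have ul0: "uniform_limit UNIV (\<lambda>j. dpart ds (\<phi>s j)) (\<lambda>_. 0) sequentially" for ds
    using cd unfolding conv_D0_def by blast
  have D: "closure D = UNIV" "csubspace D" using weakD[OF weak] by auto
  have Tx0: "(\<lambda>j. T j x) \<longlonglongrightarrow> 0" if x: "x \<in> D" for x
  proof -
    have ce: "conv_E \<phi>s (\<lambda>_. 0)"
      unfolding conv_E_def using uniform_limit_on_subset[OF ul0] by (simp add: dpart_const)
    have "(\<lambda>j. hc (\<phi>s j) x) \<longlonglongrightarrow> hc (\<lambda>_. 0) x"
      by (rule weakD(10)[OF weak sm\<phi> smooth_const ce x])
    then show ?thesis using hc_zero[OF weak x] Aeq[OF tf x] by (simp add: T_def)
  qed
  define cc where "cc hs = 2 / \<epsilon> * (real (length hs) + 3 + sum_list (map (\<lambda>(n,c,x). c * onorm (T n)) hs))"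
    for hs :: "(nat \<times> real \<times> 'x) list"
  define good where "good hs n x \<longleftrightarrow> onorm (T n) \<ge> \<epsilon>
      \<and> (\<forall>ds. length ds \<le> length hs \<longrightarrow> (\<forall>\<xi>. cc hs * norm (dpart ds (\<phi>s n) \<xi>) \<le> (1/2)^length hs))
      \<and> (\<forall>t\<in>set hs. snd (snd t) \<in> D \<longrightarrow> cc hs * norm (T n (snd (snd t))) \<le> (1/2)^length hs)
      \<and> x \<in> D \<and> norm x \<le> 1 \<and> norm (T n x) \<ge> \<epsilon> / 2" for hs n x
  have ex: "\<exists>p. good hs (fst p) (snd p)" for hs
  proof -
    define m where "m = length hs"
    define e where "e = (1/2)^m / (\<bar>cc hs\<bar> + 1)"
    have e0: "e > 0" unfolding e_def by simp
    have ebd: "cc hs * v \<le> (1/2)^m" if "0 \<le> v" "v \<le> e" for v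
    proof -
      have "cc hs * v \<le> \<bar>cc hs\<bar> * v" using that by (intro mult_right_mono) auto
      also have "\<dots> \<le> \<bar>cc hs\<bar> * e" using that by (intro mult_left_mono) auto
      also have "\<dots> = (1/2)^m * (\<bar>cc hs\<bar> / (\<bar>cc hs\<bar> + 1))" unfolding e_def by simp
      also have "\<dots> \<le> (1/2)^m" by (rule mult_left_le) auto
      finally show ?thesis .
    qed
    have ev1: "\<forall>\<^sub>F j in sequentially. \<forall>ds\<in>{ds. set ds \<subseteq> UNIV \<and> length ds \<le> m}.
        \<forall>\<xi>. cc hs * norm (dpart ds (\<phi>s j) \<xi>) \<le> (1/2)^m"
    proof (rule eventually_ball_finite[OF finite_lists_length_le[OF finite_class.finite_UNIV]], rule ballI)
      fix ds
      show "\<forall>\<^sub>F j in sequentially. \<forall>\<xi>. cc hs * norm (dpart ds (\<phi>s j) \<xi>) \<le> (1/2)^m"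
        using uniform_limitD[OF ul0 e0, of ds]
      proof eventually_elim
        case (elim j)
        show ?case
        proof
          fix \<xi>
          have "norm (dpart ds (\<phi>s j) \<xi>) \<le> e" using elim[rule_format, of \<xi>] by (simp add: dist_norm)
          then show "cc hs * norm (dpart ds (\<phi>s j) \<xi>) \<le> (1/2)^m" by (rule ebd[OF norm_ge_zero])
        qed
      qed
    qed
    have ev2: "\<forall>\<^sub>F j in sequentially. \<forall>t\<in>set hs. snd (snd t) \<in> D \<longrightarrow> cc hs * norm (T j (snd (snd t))) \<le> (1/2)^m"
    proof (rule eventually_ball_finite[OF finite_set], rule ballI)
      fix t assume "t \<in> set hs"
      show "\<forall>\<^sub>F j in sequentially. snd (snd t) \<in> D \<longrightarrow> cc hs * norm (T j (snd (snd t))) \<le> (1/2)^m"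
      proof (cases "snd (snd t) \<in> D")
        case True
        from tendstoD[OF Tx0[OF True] e0]
        show ?thesis
        proof eventually_elim
          case (elim j)
          then have "norm (T j (snd (snd t))) \<le> e" by (simp add: dist_norm)
          then show ?case by (intro impI ebd[OF norm_ge_zero])
        qed
      qed simp
    qed
    obtain N0 where N0: "\<And>j. j \<ge> N0 \<Longrightarrow> (\<forall>ds\<in>{ds. set ds \<subseteq> UNIV \<and> length ds \<le> m}.
        \<forall>\<xi>. cc hs * norm (dpart ds (\<phi>s j) \<xi>) \<le> (1/2)^m) \<and>
        (\<forall>t\<in>set hs. snd (snd t) \<in> D \<longrightarrow> cc hs * norm (T j (snd (snd t))) \<le> (1/2)^m)"
      using eventually_conj[OF ev1 ev2] unfolding eventually_sequentially by blast
    obtain j where j: "j \<ge> N0" "onorm (T j) \<ge> \<epsilon>" using \<epsilon>(2) by blast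
    obtain x where x: "x \<in> D" "norm x \<le> 1" "norm (T j x) \<ge> \<epsilon> / 2"
      using approx_onorm[OF bl D(1,2) \<epsilon>(1) j(2)] by blast
    have "good hs j x" unfolding good_def using N0[OF j(1)] j x by (auto simp: m_def)
    then show ?thesis by (intro exI[of _ "(j, x)"]) simp
  qed
  define pick where "pick hs = (SOME p. good hs (fst p) (snd p))" for hs
  have pick: "good hs (fst (pick hs)) (snd (pick hs))" for hs
    unfolding pick_def using someI_ex[OF ex[of hs]] .
  define step where "step hs = (fst (pick hs), cc hs, snd (pick hs))" for hs
  define hist where "hist = rec_nat [] (\<lambda>m h. h @ [step h])"
  have hist0: "hist 0 = []" and histS: "hist (Suc m) = hist m @ [step (hist m)]" for m
    by (simp_all add: hist_def)
  have hist_eq: "hist m = map (\<lambda>i. step (hist i)) [0..<m]" for m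
    by (induction m) (simp_all add: hist0 histS)
  define Nn where "Nn i = fst (pick (hist i))" for i
  define Xx where "Xx i = snd (pick (hist i))" for i
  define C where "C i = cc (hist i)" for i
  have len: "length (hist m) = m" for m by (simp add: hist_eq[of m])
  have stepeq: "step (hist i) = (Nn i, C i, Xx i)" for i by (simp add: step_def Nn_def C_def Xx_def)
  have sumeq: "sum_list (map (\<lambda>(n,c,x). c * onorm (T n)) (hist m)) = (\<Sum>i<m. C i * onorm (T (Nn i)))" for m
    by (induction m) (simp_all add: hist0 histS stepeq)
  have Cdef: "C m = 2 / \<epsilon> * (real m + 3 + (\<Sum>i<m. C i * onorm (T (Nn i))))" for m
  proof -
    have "C m = 2 / \<epsilon> * (real (length (hist m)) + 3 + sum_list (map (\<lambda>(n,c,x). c * onorm (T n)) (hist m)))"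
      by (simp add: C_def cc_def)
    then show ?thesis by (simp only: sumeq len)
  qed
  have goodm: "good (hist m) (Nn m) (Xx m)" for m using pick[of "hist m"] by (simp add: Nn_def Xx_def)
  have G1: "onorm (T (Nn m)) \<ge> \<epsilon>" for m using goodm[of m] by (simp add: good_def)
  have G2: "C m * norm (dpart ds (\<phi>s (Nn m)) \<xi>) \<le> (1/2)^m" if "length ds \<le> m" for m ds \<xi>
    using goodm[of m] that by (simp add: good_def len C_def)
  have G4: "Xx m \<in> D" "norm (Xx m) \<le> 1" "norm (T (Nn m) (Xx m)) \<ge> \<epsilon> / 2" for m
    using goodm[of m] by (simp_all add: good_def)
  have G3: "C m * norm (T (Nn m) (Xx i)) \<le> (1/2)^m" if "i < m" for i m
  proof -
    have "step (hist i) \<in> set (hist m)" using that by (simp add: hist_eq[of m])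
    then have "(Nn i, C i, Xx i) \<in> set (hist m)" by (simp add: stepeq)
    moreover have "\<forall>t\<in>set (hist m). snd (snd t) \<in> D \<longrightarrow> C m * norm (T (Nn m) (snd (snd t))) \<le> (1/2)^m"
      using goodm[of m] by (simp add: good_def len C_def)
    ultimately show ?thesis using G4(1)[of i] by fastforce
  qed
  have Cpos: "C m > 0" for m
  proof (induction m rule: less_induct)
    case (less m)
    have "0 \<le> (\<Sum>i<m. C i * onorm (T (Nn i)))"
      using less onorm_pos_le[OF bl] by (intro sum_nonneg) (simp add: less_imp_le)
    then have "2 / \<epsilon> * (real m + 3 + (\<Sum>i<m. C i * onorm (T (Nn i)))) > 0"
      using \<epsilon>(1) by (intro mult_pos_pos) auto
    then show ?case using Cdef[of m] by simp
  qed
  define f where "f m = (\<lambda>\<xi>. complex_of_real (C m) * \<phi>s (Nn m) \<xi>)" for m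
  have smf: "smooth (f m)" for m unfolding f_def by (rule smooth_cmult(1)[OF sm\<phi>])
  have dpf: "dpart ds (f m) = (\<lambda>\<xi>. complex_of_real (C m) * dpart ds (\<phi>s (Nn m)) \<xi>)" for ds m
    unfolding f_def by (rule smooth_cmult(2)[OF sm\<phi>])
  have bd: "\<exists>M. summable M \<and> (\<forall>\<^sub>F m in sequentially. \<forall>\<xi>. norm (dpart ds (f m) \<xi>) \<le> M m)" for ds
  proof (intro exI conjI)
    show "summable (\<lambda>m. (1/2::real)^m)" by simp
    show "\<forall>\<^sub>F m in sequentially. \<forall>\<xi>. norm (dpart ds (f m) \<xi>) \<le> (1/2)^m"
      unfolding eventually_sequentially
    proof (intro exI[of _ "length ds"] allI impI)
      fix m \<xi> assume "length ds \<le> m"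
      then show "norm (dpart ds (f m) \<xi>) \<le> (1/2)^m"
        using G2[of ds m \<xi>] Cpos[of m] by (simp add: dpf norm_mult)
    qed
  qed
  define \<Psi> where "\<Psi> = (\<lambda>\<xi>. \<Sum>m. f m \<xi>)"
  have sm\<Psi>: "smooth \<Psi>" unfolding \<Psi>_def by (rule smooth_series(1)[OF smf bd])
  have supp: "tsupport \<Psi> \<subseteq> K0"
  proof -
    have "{\<xi>. \<Psi> \<xi> \<noteq> 0} \<subseteq> K0"
    proof
      fix \<xi> assume "\<xi> \<in> {\<xi>. \<Psi> \<xi> \<noteq> 0}"
      then have ne: "\<Psi> \<xi> \<noteq> 0" by simp
      show "\<xi> \<in> K0"
      proof (rule ccontr)
        assume "\<xi> \<notin> K0"
        then have "\<phi>s (Nn m) \<xi> = 0" for m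
          using K0(2)[of "Nn m"] closure_subset[of "{x. \<phi>s (Nn m) x \<noteq> 0}"] by (auto simp: tsupport_def)
        then have "\<Psi> \<xi> = 0" by (simp add: \<Psi>_def f_def)
        with ne show False by simp
      qed
    qed
    then show ?thesis unfolding tsupport_def
      by (intro closure_minimal compact_imp_closed[OF K0(1)])
  qed
  have tf\<Psi>: "test_fun \<Psi>"
  proof -
    have "tsupport \<Psi> = K0 \<inter> tsupport \<Psi>" using supp by blast
    then have "compact (tsupport \<Psi>)" using compact_Int_closed[OF K0(1), of "tsupport \<Psi>"]
      by (simp add: tsupport_def)
    then show ?thesis using sm\<Psi> by (simp add: test_fun_def)
  qed
  define PS where "PS N = (\<lambda>\<xi>. \<Sum>m<N. f m \<xi>)" for N
  have smPS: "smooth (PS N)" for N unfolding PS_def using smooth_sum[where f=f, OF smf] by blast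
  have cePS: "conv_E PS \<Psi>"
    unfolding conv_E_def
  proof safe
    fix ds K
    have "uniform_limit UNIV (\<lambda>N. dpart ds (PS N)) (dpart ds \<Psi>) sequentially"
      unfolding PS_def \<Psi>_def smooth_series(2)[OF smf bd] by (rule smooth_series(3)[OF smf bd])
    then show "uniform_limit K (\<lambda>N. dpart ds (PS N)) (dpart ds \<Psi>) sequentially"
      by (rule uniform_limit_on_subset) simp
  qed
  have hcPS: "hc (PS N) x = (\<Sum>m<N. C m *\<^sub>R T (Nn m) x)" if x: "x \<in> D" for N x
  proof (induction N)
    case 0
    show ?case using hc_zero[OF weak x] by (simp add: PS_def)
  next
    case (Suc N)
    have "hc (PS (Suc N)) x = hc (\<lambda>\<xi>. PS N \<xi> + f N \<xi>) x" by (simp add: PS_def)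
    also have "\<dots> = hc (PS N) x + hc (f N) x" by (rule weakD(5)[OF weak smPS smf x])
    also have "hc (f N) x = C N *\<^sub>R T (Nn N) x"
      unfolding f_def weakD(6)[OF weak sm\<phi> x] scaleC_of_real Aeq[OF tf x] T_def ..
    finally show ?case using Suc by simp
  qed
  have lim: "(\<lambda>N. \<Sum>m<N. C m *\<^sub>R T (Nn m) x) \<longlonglongrightarrow> A \<Psi> x" if x: "x \<in> D" for x
    using weakD(10)[OF weak smPS sm\<Psi> cePS x] unfolding hcPS[OF x] Aeq[OF tf\<Psi> x] .
  obtain B where B: "\<And>x. norm (A \<Psi> x) \<le> B * norm x" using Abl[OF tf\<Psi>] unfolding bounded_cop_def by blast
  have lower: "norm (\<Sum>m<N. C m *\<^sub>R T (Nn m) (Xx k)) \<ge> real k + 1" if N: "N \<ge> Suc k" for N k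
  proof -
    define g where "g m = C m *\<^sub>R T (Nn m) (Xx k)" for m
    have split: "(\<Sum>m<N. g m) = (\<Sum>m<k. g m) + g k + (\<Sum>m\<in>{Suc k..<N}. g m)"
    proof -
      have U: "{..<N} = {..<Suc k} \<union> {Suc k..<N}" using N by auto
      have "(\<Sum>m<N. g m) = (\<Sum>m<Suc k. g m) + (\<Sum>m\<in>{Suc k..<N}. g m)"
        unfolding U by (rule sum.union_disjoint) auto
      then show ?thesis by simp
    qed
    define S where "S = (\<Sum>i<k. C i * onorm (T (Nn i)))"
    have a: "norm (\<Sum>m<k. g m) \<le> S"
    proof -
      have "norm (\<Sum>m<k. g m) \<le> (\<Sum>m<k. norm (g m))" by (rule norm_sum)
      also have "\<dots> \<le> S" unfolding S_def
      proof (rule sum_mono)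
        fix m
        have "norm (T (Nn m) (Xx k)) \<le> onorm (T (Nn m)) * norm (Xx k)" by (rule onorm[OF bl])
        also have "\<dots> \<le> onorm (T (Nn m))" using G4(2)[of k] onorm_pos_le[OF bl]
          by (simp add: mult_left_le)
        finally show "norm (g m) \<le> C m * onorm (T (Nn m))"
          using Cpos[of m] by (simp add: g_def mult_left_mono)
      qed
      finally show ?thesis .
    qed
    have b: "norm (g k) \<ge> real k + 3 + S"
    proof -
      have "norm (g k) = C k * norm (T (Nn k) (Xx k))" using Cpos[of k] by (simp add: g_def)
      also have "\<dots> \<ge> C k * (\<epsilon> / 2)" using G4(3)[of k] Cpos[of k] by (intro mult_left_mono) auto
      moreover have "C k * (\<epsilon> / 2) = real k + 3 + S"
        unfolding Cdef[of k] S_def using \<epsilon>(1) by (simp add: field_simps)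
      ultimately show ?thesis by linarith
    qed
    have c: "norm (\<Sum>m\<in>{Suc k..<N}. g m) \<le> 2"
    proof -
      have "norm (\<Sum>m\<in>{Suc k..<N}. g m) \<le> (\<Sum>m\<in>{Suc k..<N}. norm (g m))" by (rule norm_sum)
      also have "\<dots> \<le> (\<Sum>m\<in>{Suc k..<N}. (1/2::real)^m)"
      proof (rule sum_mono)
        fix m assume "m \<in> {Suc k..<N}"
        then have "k < m" by simp
        then show "norm (g m) \<le> (1/2)^m" using G3[of k m] Cpos[of m] by (simp add: g_def)
      qed
      also have "\<dots> \<le> (\<Sum>m. (1/2::real)^m)" by (rule sum_le_suminf) auto
      also have "\<dots> = 2" using suminf_geometric[of "1/2::real"] by simp
      finally show ?thesis .
    qed
    have gk: "g k = (\<Sum>m<N. g m) - (\<Sum>m<k. g m) - (\<Sum>m\<in>{Suc k..<N}. g m)"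
      unfolding split by (simp add: algebra_simps)
    have t1: "norm (g k) \<le> norm ((\<Sum>m<N. g m) - (\<Sum>m<k. g m)) + norm (\<Sum>m\<in>{Suc k..<N}. g m)"
      unfolding gk by (rule norm_triangle_ineq4)
    have t2: "norm ((\<Sum>m<N. g m) - (\<Sum>m<k. g m)) \<le> norm (\<Sum>m<N. g m) + norm (\<Sum>m<k. g m)"
      by (rule norm_triangle_ineq4)
    have tri: "norm (\<Sum>m<N. g m) \<ge> norm (g k) - norm (\<Sum>m<k. g m) - norm (\<Sum>m\<in>{Suc k..<N}. g m)"
      using t1 t2 by linarith
    have e: "(\<Sum>m<N. C m *\<^sub>R T (Nn m) (Xx k)) = (\<Sum>m<N. g m)" by (simp add: g_def)
    show ?thesis unfolding e using tri a b c by linarith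
  qed
  have L: "norm (A \<Psi> (Xx k)) \<ge> real k + 1" for k
  proof -
    have "\<exists>N. \<forall>n\<ge>N. real k + 1 \<le> norm (\<Sum>m<n. C m *\<^sub>R T (Nn m) (Xx k))"
      by (intro exI[of _ "Suc k"] allI impI lower)
    then show ?thesis by (rule LIMSEQ_le_const[OF tendsto_norm[OF lim[OF G4(1)[of k]]]])
  qed
  obtain k :: nat where k: "real k > max B 0" using reals_Archimedean2 by blast
  have U: "norm (A \<Psi> (Xx k)) \<le> max B 0"
  proof -
    have "norm (A \<Psi> (Xx k)) \<le> B * norm (Xx k)" by (rule B)
    also have "\<dots> \<le> max B 0"
    proof (cases "B \<ge> 0")
      case True
      then have "B * norm (Xx k) \<le> B" using G4(2)[of k] by (intro mult_left_le) auto
      then show ?thesis by simp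
    next
      case False
      then have "B * norm (Xx k) \<le> 0" by (intro mult_nonpos_nonneg) auto
      then show ?thesis by simp
    qed
    finally show ?thesis .
  qed
  show False using L[of k] U k by linarith
qed

lemma in_range:
  fixes hc :: "(real^'n::finite \<Rightarrow> complex) \<Rightarrow> 'x::complex_banach \<Rightarrow> 'x"
  assumes weak: "weak_hyperop c D hc" and x: "x \<in> D"
  shows "\<exists>\<psi> y. test_fun \<psi> \<and> y \<in> D \<and> hc \<psi> y = x"
proof -
  obtain R where R: "R \<ge> 0" "\<And>h. smooth h \<Longrightarrow> (\<forall>\<xi>. norm \<xi> < R \<longrightarrow> h \<xi> = 0) \<Longrightarrow> hc h x = 0"
    using vanishing[OF weak x] by blast
  obtain \<psi> q h :: "real^'n \<Rightarrow> complex" where b: "test_fun \<psi>" "smooth q" "smooth h" "smooth (\<lambda>\<xi>. \<psi> \<xi> + q \<xi>)"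
    "\<And>\<xi>. (\<psi> \<xi> + q \<xi>) * h \<xi> = 1" "\<And>\<xi>. norm \<xi> < R \<Longrightarrow> q \<xi> = 0"
    using bump_exists[OF R(1)] by blast
  have sm\<psi>: "smooth \<psi>" using b(1) by (simp add: test_fun_def)
  define y where "y = hc h x"
  have y: "y \<in> D" unfolding y_def by (rule weakD(3)[OF weak b(3) x])
  have qx: "hc q x = 0" using R(2)[OF b(2)] b(6) by blast
  have qy: "hc q y = 0"
  proof -
    have "hc q y = hc (\<lambda>\<xi>. q \<xi> * h \<xi>) x" unfolding y_def by (rule weakD(7)[OF weak b(2) b(3) x, symmetric])
    also have "(\<lambda>\<xi>. q \<xi> * h \<xi>) = (\<lambda>\<xi>. h \<xi> * q \<xi>)" by (simp add: mult.commute)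
    also have "hc (\<lambda>\<xi>. h \<xi> * q \<xi>) x = hc h (hc q x)" by (rule weakD(7)[OF weak b(3) b(2) x])
    also have "\<dots> = 0" unfolding qx by (rule hc_at_zero[OF weak b(3)])
    finally show ?thesis .
  qed
  have "x = hc (\<lambda>_. 1) x" using weakD(8)[OF weak x] by simp
  also have "(\<lambda>_::real^'n. 1::complex) = (\<lambda>\<xi>. (\<psi> \<xi> + q \<xi>) * h \<xi>)" using b(5) by simp
  also have "hc (\<lambda>\<xi>. (\<psi> \<xi> + q \<xi>) * h \<xi>) x = hc (\<lambda>\<xi>. \<psi> \<xi> + q \<xi>) y"
    unfolding y_def by (rule weakD(7)[OF weak b(4) b(3) x])
  also have "\<dots> = hc \<psi> y + hc q y" by (rule weakD(5)[OF weak sm\<psi> b(2) y])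
  finally have "hc \<psi> y = x" using qy by simp
  then show ?thesis using b(1) y by blast
qed

lemma test_fun_mult:
  assumes "test_fun \<phi>" "smooth g"
  shows "test_fun (\<lambda>\<xi>. g \<xi> * \<phi> \<xi>)"
proof -
  have s: "smooth (\<lambda>\<xi>. g \<xi> * \<phi> \<xi>)" using assms by (intro smooth_mult) (auto simp: test_fun_def)
  have "tsupport (\<lambda>\<xi>. g \<xi> * \<phi> \<xi>) \<subseteq> tsupport \<phi>" unfolding tsupport_def by (intro closure_mono) auto
  then have "tsupport (\<lambda>\<xi>. g \<xi> * \<phi> \<xi>) = tsupport \<phi> \<inter> tsupport (\<lambda>\<xi>. g \<xi> * \<phi> \<xi>)" by blast
  then have "compact (tsupport (\<lambda>\<xi>. g \<xi> * \<phi> \<xi>))"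
    using compact_Int_closed[of "tsupport \<phi>" "tsupport (\<lambda>\<xi>. g \<xi> * \<phi> \<xi>)"] assms(1)
    by (simp add: test_fun_def tsupport_def)
  then show ?thesis using s by (simp add: test_fun_def)
qed

theorem proposition4p6:
  fixes c :: "'n::finite \<Rightarrow> 'x::complex_banach \<Rightarrow> 'x"
    and D :: "'x set"
    and hc :: "(real ^ 'n \<Rightarrow> complex) \<Rightarrow> 'x \<Rightarrow> 'x"
    and A :: "(real ^ 'n \<Rightarrow> complex) \<Rightarrow> 'x \<Rightarrow> 'x"
  assumes weak: "weak_hyperop c D hc"
    and bdd: "\<And>\<phi>. test_fun \<phi> \<Longrightarrow>
               closure (op_graph D (hc \<phi>)) = op_graph UNIV (op_closure D (hc \<phi>))
             \<and> bounded_cop (op_closure D (hc \<phi>))"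
    and ker: "\<And>x. (\<forall>\<phi>. test_fun \<phi> \<longrightarrow> op_closure D (hc \<phi>) x = 0) \<Longrightarrow> x = 0"
    and A_def: "A = (\<lambda>\<phi>. op_closure D (hc \<phi>))"
  shows "hyperop A \<and> D \<subseteq> hyper_dom A
       \<and> closure (tuple_graph (hyper_dom A) (assoc_tuple A)) = closure (tuple_graph D c)"
proof -
  have Dd: "closure D = UNIV" using weakD(2)[OF weak] .
  have Abl: "bounded_cop (A \<phi>)" if "test_fun \<phi>" for \<phi> using bdd[OF that] by (simp add: A_def)
  have Alin: "bounded_linear (A \<phi>)" if "test_fun \<phi>" for \<phi> by (rule bounded_cop_linear[OF Abl[OF that]])
  have Acont: "continuous_on UNIV (A \<phi>)" if "test_fun \<phi>" for \<phi> by (rule bounded_cop_cont[OF Abl[OF that]])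
  have Aeq: "hc \<phi> x = A \<phi> x" if "test_fun \<phi>" "x \<in> D" for \<phi> x
  proof -
    have "(x, hc \<phi> x) \<in> closure (op_graph D (hc \<phi>))"
      using that(2) closure_subset[of "op_graph D (hc \<phi>)"] by (auto simp: op_graph_def)
    then show ?thesis using bdd[OF that(1)] by (auto simp: op_graph_def A_def)
  qed
  have sm: "smooth \<phi>" if "test_fun \<phi>" for \<phi> using that by (simp add: test_fun_def)
  have Aadd: "A (\<lambda>\<xi>. \<phi> \<xi> + \<psi> \<xi>) = (\<lambda>x. A \<phi> x + A \<psi> x)" if "test_fun \<phi>" "test_fun \<psi>" for \<phi> \<psi>
  proof -
    have "op_closure D (hc (\<lambda>\<xi>. \<phi> \<xi> + \<psi> \<xi>)) = (\<lambda>x. A \<phi> x + A \<psi> x)"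
    proof (rule graph_closure_cont(2)[OF _ Dd])
      show "continuous_on UNIV (\<lambda>x. A \<phi> x + A \<psi> x)" using Acont that by (intro continuous_intros) auto
      show "hc (\<lambda>\<xi>. \<phi> \<xi> + \<psi> \<xi>) x = A \<phi> x + A \<psi> x" if "x \<in> D" for x
        using weakD(5)[OF weak sm sm that] Aeq that \<open>test_fun \<phi>\<close> \<open>test_fun \<psi>\<close> by simp
    qed
    then show ?thesis by (simp add: A_def)
  qed
  have Ascal: "A (\<lambda>\<xi>. a * \<phi> \<xi>) = (\<lambda>x. scaleC a (A \<phi> x))" if "test_fun \<phi>" for \<phi> a
  proof -
    have "op_closure D (hc (\<lambda>\<xi>. a * \<phi> \<xi>)) = (\<lambda>x. scaleC a (A \<phi> x))"
    proof (rule graph_closure_cont(2)[OF _ Dd])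
      show "continuous_on UNIV (\<lambda>x. scaleC a (A \<phi> x))"
        using continuous_on_compose[OF Acont[OF that] linear_continuous_on[OF scaleC_bounded_linear[of a]]]
        by (simp add: o_def)
      show "hc (\<lambda>\<xi>. a * \<phi> \<xi>) x = scaleC a (A \<phi> x)" if "x \<in> D" for x
        using weakD(6)[OF weak sm[OF \<open>test_fun \<phi>\<close>] that] Aeq[OF \<open>test_fun \<phi>\<close> that] by simp
    qed
    then show ?thesis by (simp add: A_def)
  qed
  have Amult: "A (\<lambda>\<xi>. \<phi> \<xi> * \<psi> \<xi>) = A \<phi> \<circ> A \<psi>" if "test_fun \<phi>" "test_fun \<psi>" for \<phi> \<psi>
  proof -
    have "op_closure D (hc (\<lambda>\<xi>. \<phi> \<xi> * \<psi> \<xi>)) = A \<phi> \<circ> A \<psi>"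
    proof (rule graph_closure_cont(2)[OF _ Dd])
      show "continuous_on UNIV (A \<phi> \<circ> A \<psi>)"
        using continuous_on_compose[OF Acont[OF that(2)] continuous_on_subset[OF Acont[OF that(1)]]] by simp
      show "hc (\<lambda>\<xi>. \<phi> \<xi> * \<psi> \<xi>) x = (A \<phi> \<circ> A \<psi>) x" if "x \<in> D" for x
      proof -
        have "hc \<psi> x \<in> D" by (rule weakD(3)[OF weak sm[OF \<open>test_fun \<psi>\<close>] that])
        then show ?thesis
          using weakD(7)[OF weak sm[OF \<open>test_fun \<phi>\<close>] sm[OF \<open>test_fun \<psi>\<close>] that]
            Aeq[OF \<open>test_fun \<phi>\<close>] Aeq[OF \<open>test_fun \<psi>\<close> that] by simp
      qed
    qed
    then show ?thesis by (simp add: A_def)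
  qed
  have rng: "\<exists>\<psi> y. test_fun \<psi> \<and> y \<in> D \<and> A \<psi> y = x \<and> hc \<psi> y = x" if "x \<in> D" for x
    using in_range[OF weak that] Aeq by metis
  have Dsub: "D \<subseteq> hyper_dom A"
  proof
    fix x assume "x \<in> D"
    then obtain \<psi> y where "test_fun \<psi>" "A \<psi> y = x" using rng by blast
    then show "x \<in> hyper_dom A" unfolding hyper_dom_def by blast
  qed
  have hyp: "hyperop A"
    unfolding hyperop_def
  proof (intro conjI allI impI)
    show "bounded_cop (A \<phi>)" if "test_fun \<phi>" for \<phi> using Abl that .
    show "A (\<lambda>\<xi>. \<phi> \<xi> + \<psi> \<xi>) = (\<lambda>x. A \<phi> x + A \<psi> x)" if "test_fun \<phi>" "test_fun \<psi>" for \<phi> \<psi>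
      using Aadd that .
    show "A (\<lambda>\<xi>. a * \<phi> \<xi>) = (\<lambda>x. scaleC a (A \<phi> x))" if "test_fun \<phi>" for \<phi> a using Ascal that .
    show "(\<lambda>j. onorm (A (\<phi>s j))) \<longlonglongrightarrow> 0" if "\<forall>j. test_fun (\<phi>s j)" "conv_D0 \<phi>s" for \<phi>s
      using gliding[OF weak Abl Aeq] that by blast
    show "A (\<lambda>\<xi>. \<phi> \<xi> * \<psi> \<xi>) = A \<phi> \<circ> A \<psi>" if "test_fun \<phi>" "test_fun \<psi>" for \<phi> \<psi>
      using Amult that .
    show "closure (\<Union>\<phi>\<in>{\<phi>. test_fun \<phi>}. range (A \<phi>)) = UNIV"
      using closure_mono[OF Dsub] Dd unfolding hyper_dom_def by auto
    show "x = 0" if "\<forall>\<phi>. test_fun \<phi> \<longrightarrow> A \<phi> x = 0" for x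
      using ker that unfolding A_def by blast
  qed
  have csm: "smooth (coord j)" for j by (rule coord_smooth)
  have assoc: "assoc_tuple A j (A \<phi> y) = A (\<lambda>\<xi>. coord j \<xi> * \<phi> \<xi>) y" if \<phi>: "test_fun \<phi>" for j \<phi> y
  proof -
    let ?P = "\<lambda>z. \<exists>\<phi>' y'. test_fun \<phi>' \<and> A \<phi> y = A \<phi>' y' \<and> z = A (\<lambda>\<xi>. coord j \<xi> * \<phi>' \<xi>) y'"
    have "?P (A (\<lambda>\<xi>. coord j \<xi> * \<phi> \<xi>) y)" using \<phi> by blast
    then have "?P (SOME z. ?P z)" by (rule someI)
    then obtain \<phi>' y' where \<phi>': "test_fun \<phi>'" "A \<phi> y = A \<phi>' y'"
      and z: "(SOME z. ?P z) = A (\<lambda>\<xi>. coord j \<xi> * \<phi>' \<xi>) y'" by blast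
    have key: "A \<psi> (A (\<lambda>\<xi>. coord j \<xi> * g0 \<xi>) w) = A (\<lambda>\<xi>. \<psi> \<xi> * coord j \<xi>) (A g0 w)"
      if "test_fun \<psi>" "test_fun g0" for \<psi> g0 w
    proof -
      have t1: "test_fun (\<lambda>\<xi>. coord j \<xi> * g0 \<xi>)" by (rule test_fun_mult[OF that(2) csm])
      have t2: "test_fun (\<lambda>\<xi>. \<psi> \<xi> * coord j \<xi>)"
        using test_fun_mult[OF that(1) csm] by (simp add: mult.commute)
      have "A \<psi> (A (\<lambda>\<xi>. coord j \<xi> * g0 \<xi>) w) = A (\<lambda>\<xi>. \<psi> \<xi> * (coord j \<xi> * g0 \<xi>)) w"
        using Amult[OF that(1) t1] by simp
      also have "(\<lambda>\<xi>. \<psi> \<xi> * (coord j \<xi> * g0 \<xi>)) = (\<lambda>\<xi>. (\<psi> \<xi> * coord j \<xi>) * g0 \<xi>)"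
        by (simp add: mult.assoc)
      also have "A \<dots> w = A (\<lambda>\<xi>. \<psi> \<xi> * coord j \<xi>) (A g0 w)"
        using Amult[OF t2 that(2)] by simp
      finally show ?thesis .
    qed
    have "A (\<lambda>\<xi>. coord j \<xi> * \<phi>' \<xi>) y' - A (\<lambda>\<xi>. coord j \<xi> * \<phi> \<xi>) y = 0"
    proof (rule ker, intro allI impI)
      fix \<psi> :: "real^'n \<Rightarrow> complex" assume \<psi>: "test_fun \<psi>"
      have "A \<psi> (A (\<lambda>\<xi>. coord j \<xi> * \<phi>' \<xi>) y' - A (\<lambda>\<xi>. coord j \<xi> * \<phi> \<xi>) y)
          = A \<psi> (A (\<lambda>\<xi>. coord j \<xi> * \<phi>' \<xi>) y') - A \<psi> (A (\<lambda>\<xi>. coord j \<xi> * \<phi> \<xi>) y)"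
        by (rule linear_diff[OF bounded_linear.linear[OF Alin[OF \<psi>]]])
      also have "\<dots> = 0" using key[OF \<psi> \<phi>'(1)] key[OF \<psi> \<phi>] \<phi>'(2) by simp
      finally show "op_closure D (hc \<psi>) (A (\<lambda>\<xi>. coord j \<xi> * \<phi>' \<xi>) y' - A (\<lambda>\<xi>. coord j \<xi> * \<phi> \<xi>) y) = 0"
        by (simp add: A_def)
    qed
    then have "(SOME z. ?P z) = A (\<lambda>\<xi>. coord j \<xi> * \<phi> \<xi>) y" using z by simp
    then show ?thesis unfolding assoc_tuple_def .
  qed
  have sub1: "tuple_graph (hyper_dom A) (assoc_tuple A) \<subseteq> closure (tuple_graph D c)"
  proof
    fix p assume "p \<in> tuple_graph (hyper_dom A) (assoc_tuple A)"
    then obtain \<phi> y where \<phi>: "test_fun \<phi>" and p: "p = (A \<phi> y, \<chi> j. assoc_tuple A j (A \<phi> y))"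
      unfolding tuple_graph_def hyper_dom_def by blast
    have "y \<in> closure D" using Dd by simp
    then obtain s where s: "\<And>n. s n \<in> D" "s \<longlonglongrightarrow> y" unfolding closure_sequential by blast
    define xs where "xs n = hc \<phi> (s n)" for n
    have xsD: "xs n \<in> D" for n unfolding xs_def by (rule weakD(3)[OF weak sm[OF \<phi>] s(1)])
    have cx: "c j (xs n) = A (\<lambda>\<xi>. coord j \<xi> * \<phi> \<xi>) (s n)" for j n
    proof -
      have "c j (xs n) = hc (coord j) (hc \<phi> (s n))" using weakD(9)[OF weak xsD[of n]] by (simp add: xs_def)
      also have "\<dots> = hc (\<lambda>\<xi>. coord j \<xi> * \<phi> \<xi>) (s n)" by (rule weakD(7)[OF weak csm sm[OF \<phi>] s(1), symmetric])
      also have "\<dots> = A (\<lambda>\<xi>. coord j \<xi> * \<phi> \<xi>) (s n)" by (rule Aeq[OF test_fun_mult[OF \<phi> csm] s(1)])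
      finally show ?thesis .
    qed
    have "(\<lambda>n. (xs n, \<chi> j. c j (xs n))) \<longlonglongrightarrow> (A \<phi> y, \<chi> j. A (\<lambda>\<xi>. coord j \<xi> * \<phi> \<xi>) y)"
    proof (intro tendsto_Pair tendsto_vec_lambda)
      show "xs \<longlonglongrightarrow> A \<phi> y" unfolding xs_def Aeq[OF \<phi> s(1)]
        by (rule continuous_on_tendsto_compose[OF Acont[OF \<phi>] s(2)]) auto
      fix j
      show "(\<lambda>n. c j (xs n)) \<longlonglongrightarrow> A (\<lambda>\<xi>. coord j \<xi> * \<phi> \<xi>) y" unfolding cx
        by (rule continuous_on_tendsto_compose[OF Acont[OF test_fun_mult[OF \<phi> csm]] s(2)]) auto
    qed
    moreover have "(xs n, \<chi> j. c j (xs n)) \<in> tuple_graph D c" for n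
      using xsD unfolding tuple_graph_def by blast
    ultimately have "(A \<phi> y, \<chi> j. A (\<lambda>\<xi>. coord j \<xi> * \<phi> \<xi>) y) \<in> closure (tuple_graph D c)"
      unfolding closure_sequential by (intro exI[of _ "\<lambda>n. (xs n, \<chi> j. c j (xs n))"]) auto
    then show "p \<in> closure (tuple_graph D c)" unfolding p assoc[OF \<phi>] .
  qed
  have sub2: "tuple_graph D c \<subseteq> tuple_graph (hyper_dom A) (assoc_tuple A)"
  proof
    fix p assume "p \<in> tuple_graph D c"
    then obtain x where x: "x \<in> D" and p: "p = (x, \<chi> j. c j x)" unfolding tuple_graph_def by blast
    obtain \<psi> y where \<psi>: "test_fun \<psi>" "y \<in> D" "A \<psi> y = x" "hc \<psi> y = x" using rng[OF x] by blast
    have "assoc_tuple A j x = c j x" for j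
    proof -
      have "assoc_tuple A j (A \<psi> y) = A (\<lambda>\<xi>. coord j \<xi> * \<psi> \<xi>) y" by (rule assoc[OF \<psi>(1)])
      then have "assoc_tuple A j x = A (\<lambda>\<xi>. coord j \<xi> * \<psi> \<xi>) y" using \<psi>(3) by simp
      also have "\<dots> = hc (\<lambda>\<xi>. coord j \<xi> * \<psi> \<xi>) y" by (rule Aeq[OF test_fun_mult[OF \<psi>(1) csm] \<psi>(2), symmetric])
      also have "\<dots> = hc (coord j) (hc \<psi> y)" by (rule weakD(7)[OF weak csm sm[OF \<psi>(1)] \<psi>(2)])
      also have "\<dots> = c j x" using weakD(9)[OF weak x] \<psi>(4) by simp
      finally show ?thesis .
    qed
    then have "p = (x, \<chi> j. assoc_tuple A j x)" unfolding p by simp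
    then show "p \<in> tuple_graph (hyper_dom A) (assoc_tuple A)"
      using Dsub x unfolding tuple_graph_def by blast
  qed
  have "closure (tuple_graph (hyper_dom A) (assoc_tuple A)) = closure (tuple_graph D c)"
  proof
    show "closure (tuple_graph (hyper_dom A) (assoc_tuple A)) \<subseteq> closure (tuple_graph D c)"
      by (rule closure_minimal[OF sub1 closed_closure])
    show "closure (tuple_graph D c) \<subseteq> closure (tuple_graph (hyper_dom A) (assoc_tuple A))"
      by (rule closure_mono[OF sub2])
  qed
  then show ?thesis using hyp Dsub by blast
qed

end
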